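(* Let $\Gamma\leq Tr_1(n,\mathbb{Z})$ be a finitely generated torsion-free nilpotent group with lattice hull $\Delta\leq Tr_1(n,\mathbb{Z})$, $p$ a prime, and $\Gamma_p,\Delta_p,L_p,R_p$ as in the context. Then $\log(\Delta_{p})=\mathbb{Z}_{p}\log(\Delta)\subseteq L_{p}$, where $\mathbb{Z}_{p}\log(\Delta)$ is the $\mathbb{Z}_p$-submodule of $L_p$ spanned by $\log(\Delta)$. In particular, $\log(\Delta_{p})$ is a $\mathbb{Z}_{p}$-lattice in $L_{p}$ and $\Gamma_{p}\leq\Delta_{p}\leq R_{p}$.
   Context: $\log,\exp$ are the mutually inverse maps between upper unitriangular matrices $Tr_1(n,\mathbb{Q}_p)$ and strictly upper triangular matrices $Tr_0(n,\mathbb{Q}_p)$. $L$ is the $\mathbb{Q}$-span of $\log\Gamma$ and $R=\exp(L)$. The lattice hull $\Delta$ is the unique minimal subgroup $\Gamma\leq\Delta\leq R$ such that $\log(\Delta)$ is a lattice in $L$ (a free $\mathbb{Z}$-module spanning $L$ over $\mathbb{Q}$); it is assumed that $\Delta\leq Tr_1(n,\mathbb{Z})$. $\Gamma_p$, $\Delta_p$ are the closures of $\Gamma,\Delta$ in $Tr_1(n,\mathbb{Z}_p)$. $L_p$ is the $\mathbb{Q}$-span of $\log(\Gamma_p)$, a $\mathbb{Q}_p$-Lie algebra, and $R_p=\exp(L_p)$, a group. A $\mathbb{Z}_p$-lattice in $L_p$ is a free $\mathbb{Z}_p$-module spanning $L_p$ over $\mathbb{Q}_p$. *)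

theory Defs
  imports Complex_Main "HOL-Computational_Algebra.Primes"
begin

text \<open>Square matrices of size n are functions nat => nat => 'a whose entries
vanish outside the index range {..<n} x {..<n}.  The ambient field 'k plays the
role of Q_p (characterised axiomatically below up to isometric isomorphism);
Q and Z are embedded in 'k via of_rat / of_int.\<close>

type_synonym 'a sqm = "nat \<Rightarrow> nat \<Rightarrow> 'a"

definition wfm :: "nat \<Rightarrow> 'a::zero sqm \<Rightarrow> bool" where
  "wfm n M \<longleftrightarrow> (\<forall>i j. (n \<le> i \<or> n \<le> j) \<longrightarrow> M i j = 0)"

definition mmul :: "nat \<Rightarrow> 'a::comm_ring_1 sqm \<Rightarrow> 'a sqm \<Rightarrow> 'a sqm" where
  "mmul n A B = (\<lambda>i j. \<Sum>k<n. A i k * B k j)"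

definition mid :: "nat \<Rightarrow> 'a::comm_ring_1 sqm" where
  "mid n = (\<lambda>i j. if i = j \<and> i < n then 1 else 0)"

definition mpow :: "nat \<Rightarrow> 'a::comm_ring_1 sqm \<Rightarrow> nat \<Rightarrow> 'a sqm" where
  "mpow n A k = ((mmul n A) ^^ k) (mid n)"

definition msub :: "'a::comm_ring_1 sqm \<Rightarrow> 'a sqm \<Rightarrow> 'a sqm" where
  "msub A B = (\<lambda>i j. A i j - B i j)"

text \<open>Matrix logarithm of a unipotent matrix and exponential of a nilpotent
matrix (finite series since (U - 1)^n = 0 resp. N^n = 0).\<close>

definition mlog :: "nat \<Rightarrow> 'a::field_char_0 sqm \<Rightarrow> 'a sqm" where
  "mlog n U = (\<lambda>i j. \<Sum>k\<in>{1..<n}.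
      ((-1) ^ (k + 1) / of_nat k) * mpow n (msub U (mid n)) k i j)"

definition mexp :: "nat \<Rightarrow> 'a::field_char_0 sqm \<Rightarrow> 'a sqm" where
  "mexp n N = (\<lambda>i j. \<Sum>k<n. (1 / of_nat (fact k)) * mpow n N k i j)"

definition Tr1 :: "nat \<Rightarrow> 'a::comm_ring_1 set \<Rightarrow> 'a sqm set" where
  "Tr1 n S = {M. wfm n M \<and> (\<forall>i<n. M i i = 1) \<and> (\<forall>i<n. \<forall>j<i. M i j = 0)
                 \<and> (\<forall>i<n. \<forall>j<n. M i j \<in> S)}"

definition is_mgroup :: "nat \<Rightarrow> 'a::comm_ring_1 sqm set \<Rightarrow> bool" where
  "is_mgroup n G \<longleftrightarrow> G \<subseteq> {M. wfm n M} \<and> mid n \<in> G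
     \<and> (\<forall>a\<in>G. \<forall>b\<in>G. mmul n a b \<in> G)
     \<and> (\<forall>a\<in>G. \<exists>b\<in>G. mmul n a b = mid n)"

definition mgen :: "nat \<Rightarrow> 'a::comm_ring_1 sqm set \<Rightarrow> 'a sqm set" where
  "mgen n S = \<Inter>{H. is_mgroup n H \<and> S \<subseteq> H}"

definition fin_gen :: "nat \<Rightarrow> 'a::comm_ring_1 sqm set \<Rightarrow> bool" where
  "fin_gen n G \<longleftrightarrow> (\<exists>F. finite F \<and> F \<subseteq> G \<and> G = mgen n F)"

definition torsion_free :: "nat \<Rightarrow> 'a::comm_ring_1 sqm set \<Rightarrow> bool" where
  "torsion_free n G \<longleftrightarrow> (\<forall>g\<in>G. \<forall>k>0. mpow n g k = mid n \<longrightarrow> g = mid n)"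

definition mcomms :: "nat \<Rightarrow> 'a::comm_ring_1 sqm set \<Rightarrow> 'a sqm set \<Rightarrow> 'a sqm set" where
  "mcomms n A B = {mmul n (mmul n (mmul n a b) a') b' | a b a' b'.
      a \<in> A \<and> b \<in> B \<and> wfm n a' \<and> wfm n b'
      \<and> mmul n a a' = mid n \<and> mmul n b b' = mid n}"

fun lcs :: "nat \<Rightarrow> 'a::comm_ring_1 sqm set \<Rightarrow> nat \<Rightarrow> 'a sqm set" where
  "lcs n G 0 = G"
| "lcs n G (Suc k) = mgen n (mcomms n G (lcs n G k))"

definition nilpotent_mgroup :: "nat \<Rightarrow> 'a::comm_ring_1 sqm set \<Rightarrow> bool" where
  "nilpotent_mgroup n G \<longleftrightarrow> (\<exists>k. lcs n G k = {mid n})"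

definition cspan :: "'a::field_char_0 set \<Rightarrow> 'a sqm set \<Rightarrow> 'a sqm set" where
  "cspan C S = {(\<lambda>i j. \<Sum>M\<in>F. c M * M i j) | F c.
                   finite F \<and> F \<subseteq> S \<and> (\<forall>M\<in>F. c M \<in> C)}"

abbreviation qspan :: "'a::field_char_0 sqm set \<Rightarrow> 'a sqm set" where
  "qspan S \<equiv> cspan \<rat> S"

abbreviation zspan :: "'a::field_char_0 sqm set \<Rightarrow> 'a sqm set" where
  "zspan S \<equiv> cspan \<int> S"

definition c_indep :: "'a::field_char_0 set \<Rightarrow> 'a sqm set \<Rightarrow> bool" where
  "c_indep C B \<longleftrightarrow> (\<forall>c. (\<forall>b\<in>B. c b \<in> C) \<longrightarrow>
       (\<lambda>i j. \<Sum>b\<in>B. c b * b i j) = (\<lambda>i j. 0) \<longrightarrow> (\<forall>b\<in>B. c b = 0))"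

definition is_lattice_in :: "'a::field_char_0 set \<Rightarrow> 'a set \<Rightarrow> 'a sqm set \<Rightarrow> 'a sqm set \<Rightarrow> bool" where
  "is_lattice_in C K S L \<longleftrightarrow>
     (\<exists>B. finite B \<and> c_indep C B \<and> S = cspan C B \<and> cspan K S = L)"

abbreviation Z_lattice :: "'a::field_char_0 sqm set \<Rightarrow> 'a sqm set \<Rightarrow> bool" where
  "Z_lattice S L \<equiv> is_lattice_in \<int> \<rat> S L"

definition Lie_L :: "nat \<Rightarrow> 'a::field_char_0 sqm set \<Rightarrow> 'a sqm set" where
  "Lie_L n G = qspan (mlog n ` G)"

definition Mal_R :: "nat \<Rightarrow> 'a::field_char_0 sqm set \<Rightarrow> 'a sqm set" where
  "Mal_R n G = mexp n ` Lie_L n G"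

definition lattice_hull :: "nat \<Rightarrow> 'a::field_char_0 sqm set \<Rightarrow> 'a sqm set \<Rightarrow> bool" where
  "lattice_hull n G D \<longleftrightarrow>
     is_mgroup n D \<and> G \<subseteq> D \<and> D \<subseteq> Mal_R n G \<and> Z_lattice (mlog n ` D) (Lie_L n G)
     \<and> (\<forall>D'. is_mgroup n D' \<and> G \<subseteq> D' \<and> D' \<subseteq> Mal_R n G
              \<and> Z_lattice (mlog n ` D') (Lie_L n G) \<longrightarrow> D \<subseteq> D')"

text \<open>Axiomatic characterisation of (Q_p, |.|_p): a field of characteristic 0 with
a non-archimedean absolute value that restricts to the p-adic absolute value on Q,
is complete, and in which Q is dense.  This determines (Q_p,|.|_p) up to
isometric isomorphism.\<close>

definition padic_absval :: "nat \<Rightarrow> ('k::field_char_0 \<Rightarrow> real) \<Rightarrow> bool" where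
  "padic_absval p av \<longleftrightarrow>
     (\<forall>x. 0 \<le> av x) \<and> (\<forall>x. av x = 0 \<longleftrightarrow> x = 0)
     \<and> (\<forall>x y. av (x * y) = av x * av y)
     \<and> (\<forall>x y. av (x + y) \<le> max (av x) (av y))
     \<and> av (of_nat p) = 1 / real p
     \<and> (\<forall>m::int. coprime m (int p) \<longrightarrow> av (of_int m) = 1)
     \<and> (\<forall>X::nat \<Rightarrow> 'k. (\<forall>e>0. \<exists>N. \<forall>m\<ge>N. \<forall>k\<ge>N. av (X m - X k) < e)
           \<longrightarrow> (\<exists>x. \<forall>e>0. \<exists>N. \<forall>m\<ge>N. av (X m - x) < e))
     \<and> (\<forall>x. \<forall>e>0. \<exists>q. av (x - of_rat q) < e)"

definition Zp :: "('k::field_char_0 \<Rightarrow> real) \<Rightarrow> 'k set" where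
  "Zp av = {x. av x \<le> 1}"

definition pclosure :: "('k::field_char_0 \<Rightarrow> real) \<Rightarrow> nat \<Rightarrow> 'k sqm set \<Rightarrow> 'k sqm set" where
  "pclosure av n S = {M \<in> Tr1 n (Zp av). \<forall>e>0. \<exists>g\<in>S. \<forall>i<n. \<forall>j<n. av (M i j - g i j) < e}"

end

theory Submission
  imports Defs "HOL-Computational_Algebra.Formal_Power_Series" "HOL-Library.Function_Algebras"
begin

unbundle fps_syntax

lemma mmul_assoc: "mmul n (mmul n A B) C = mmul n A (mmul n B C)"
  unfolding mmul_def
  by (auto simp: fun_eq_iff sum_distrib_left sum_distrib_right mult.assoc intro: sum.swap)

lemma wfm_mid[simp]: "wfm n (mid n)" by (simp add: wfm_def mid_def)

lemma wfm_mmul: "wfm n A \<Longrightarrow> wfm n B \<Longrightarrow> wfm n (mmul n A B)"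
  by (auto simp: wfm_def mmul_def)

lemma mmul_mid_left: "wfm n A \<Longrightarrow> mmul n (mid n) A = A"
proof (intro ext)
  fix i j assume w: "wfm n A"
  have "mmul n (mid n) A i j = (\<Sum>k<n. if k = i then (if i < n then A i j else 0) else 0)"
    unfolding mmul_def mid_def by (intro sum.cong) auto
  also have "\<dots> = A i j" using w by (auto simp: wfm_def)
  finally show "mmul n (mid n) A i j = A i j" .
qed

lemma mmul_mid_right: "wfm n A \<Longrightarrow> mmul n A (mid n) = A"
proof (intro ext)
  fix i j assume w: "wfm n A"
  have "mmul n A (mid n) i j = (\<Sum>k<n. if k = j then (if j < n then A i j else 0) else 0)"
    unfolding mmul_def mid_def by (intro sum.cong) auto
  also have "\<dots> = A i j" using w by (auto simp: wfm_def)
  finally show "mmul n A (mid n) i j = A i j" .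
qed

lemma sum_swap3: "(\<Sum>l\<in>L. \<Sum>a\<in>A. \<Sum>b\<in>B. F l a b) = (\<Sum>a\<in>A. \<Sum>b\<in>B. \<Sum>l\<in>L. F l a b)"
proof -
  have "(\<Sum>l\<in>L. \<Sum>a\<in>A. \<Sum>b\<in>B. F l a b) = (\<Sum>a\<in>A. \<Sum>l\<in>L. \<Sum>b\<in>B. F l a b)" by (rule sum.swap)
  also have "\<dots> = (\<Sum>a\<in>A. \<Sum>b\<in>B. \<Sum>l\<in>L. F l a b)" by (rule sum.cong[OF refl], rule sum.swap)
  finally show ?thesis .
qed

lemma mpow_0[simp]: "mpow n A 0 = mid n" by (simp add: mpow_def)
lemma mpow_Suc: "mpow n A (Suc k) = mmul n A (mpow n A k)" by (simp add: mpow_def)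

lemma wfm_mpow: "wfm n A \<Longrightarrow> wfm n (mpow n A k)"
  by (induct k) (auto simp: mpow_Suc wfm_mmul)

lemma mpow_add: "wfm n A \<Longrightarrow> mpow n A (a + b) = mmul n (mpow n A a) (mpow n A b)"
  by (induct a) (auto simp: mpow_Suc mmul_mid_left wfm_mpow mmul_assoc)

definition supper :: "nat \<Rightarrow> 'a::zero sqm \<Rightarrow> bool" where
  "supper n N \<longleftrightarrow> wfm n N \<and> (\<forall>i j. j \<le> i \<longrightarrow> N i j = 0)"

lemma supper_mpow_zero: "supper n N \<Longrightarrow> j < i + k \<Longrightarrow> mpow n N k i j = 0"
proof (induct k arbitrary: i j)
  case 0 then show ?case by (simp add: mid_def)
next
  case (Suc k)
  have "N i l * mpow n N k l j = 0" for l
  proof (cases "l \<le> i")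
    case True then show ?thesis using Suc.prems by (simp add: supper_def)
  next
    case False then show ?thesis using Suc by auto
  qed
  then show ?case by (simp add: mpow_Suc mmul_def)
qed

lemma supper_mpow_big: "supper n N \<Longrightarrow> n \<le> k \<Longrightarrow> mpow n N k = (\<lambda>i j. 0)"
proof (intro ext)
  fix i j assume s: "supper n N" and k: "n \<le> k"
  have w: "wfm n (mpow n N k)" using s wfm_mpow by (auto simp: supper_def)
  show "mpow n N k i j = 0"
  proof (cases "i < n \<and> j < n")
    case True then show ?thesis using supper_mpow_zero[OF s] k by auto
  next
    case False then show ?thesis using w by (auto simp: wfm_def)
  qed
qed

lemma supper_mpow: "supper n N \<Longrightarrow> 0 < k \<Longrightarrow> supper n (mpow n N k)"
  using supper_mpow_zero[of n N] wfm_mpow[of n N] by (auto simp: supper_def)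

definition ev :: "nat \<Rightarrow> 'a::comm_ring_1 sqm \<Rightarrow> 'a fps \<Rightarrow> 'a sqm" where
  "ev n N f = (\<lambda>i j. \<Sum>k<n. f $ k * mpow n N k i j)"

lemma ev_cong: "(\<And>k. k < n \<Longrightarrow> f $ k = g $ k) \<Longrightarrow> ev n N f = ev n N g"
  by (simp add: ev_def)

lemma ev_add: "ev n N (f + g) = (\<lambda>i j. ev n N f i j + ev n N g i j)"
  by (simp add: ev_def distrib_right sum.distrib)

lemma ev_diff: "ev n N (f - g) = (\<lambda>i j. ev n N f i j - ev n N g i j)"
  by (simp add: ev_def left_diff_distrib sum_subtractf)

lemma ev_const_mult: "ev n N (fps_const c * f) = (\<lambda>i j. c * ev n N f i j)"
  by (simp add: ev_def sum_distrib_left mult.assoc)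

lemma ev_one: "ev n N 1 = mid n"
proof (intro ext)
  fix i j
  have "ev n N 1 i j = (\<Sum>k<n. if k = 0 then mid n i j else 0)"
    unfolding ev_def by (intro sum.cong) auto
  also have "\<dots> = mid n i j" by (auto simp: mid_def)
  finally show "ev n N 1 i j = mid n i j" .
qed

lemma wfm_ev: "wfm n N \<Longrightarrow> wfm n (ev n N f)"
  using wfm_mpow[of n N] by (auto simp: wfm_def ev_def)

lemma supper_ev: "supper n N \<Longrightarrow> f $ 0 = 0 \<Longrightarrow> supper n (ev n N f)"
proof -
  assume s: "supper n N" and f0: "f $ 0 = 0"
  have "wfm n (ev n N f)" using s wfm_ev by (auto simp: supper_def)
  moreover have "ev n N f i j = 0" if "j \<le> i" for i j
    unfolding ev_def
  proof (rule sum.neutral, clarify)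
    fix k assume "k < n"
    show "f $ k * mpow n N k i j = 0"
      using f0 supper_mpow_zero[OF s, of j i k] that by (cases k) auto
  qed
  ultimately show ?thesis by (simp add: supper_def)
qed

lemma ev_X: "supper n N \<Longrightarrow> ev n N fps_X = N"
proof (intro ext)
  fix i j assume s: "supper n N"
  show "ev n N fps_X i j = N i j"
  proof (cases "1 < n")
    case True
    have "ev n N fps_X i j = (\<Sum>k<n. (if k = 1 then mpow n N 1 i j else 0))"
      unfolding ev_def by (intro sum.cong) (auto simp: fps_X_def)
    also have "\<dots> = mpow n N 1 i j" using True by simp
    also have "\<dots> = N i j" using s by (simp add: mpow_Suc mmul_mid_right supper_def)
    finally show ?thesis .
  next
    case False
    then have "N i j = 0" using s by (cases "i < n \<and> j < n") (auto simp: supper_def wfm_def)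
    moreover have "ev n N fps_X i j = 0" unfolding ev_def using False
      by (intro sum.neutral) (auto simp: fps_X_def)
    ultimately show ?thesis by simp
  qed
qed

lemma ev_mult:
  assumes s: "supper n N"
  shows "ev n N (f * g) = mmul n (ev n N f) (ev n N g)"
proof (intro ext)
  fix i j
  have w: "wfm n N" using s by (simp add: supper_def)
  let ?h = "\<lambda>a b. f $ a * g $ b * mpow n N (a + b) i j"
  have "mmul n (ev n N f) (ev n N g) i j
      = (\<Sum>l<n. (\<Sum>a<n. f $ a * mpow n N a i l) * (\<Sum>b<n. g $ b * mpow n N b l j))"
    by (simp add: mmul_def ev_def)
  also have "\<dots> = (\<Sum>a<n. \<Sum>b<n. f $ a * g $ b * (\<Sum>l<n. mpow n N a i l * mpow n N b l j))"
  proof -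
    have "\<And>l. (\<Sum>a<n. f $ a * mpow n N a i l) * (\<Sum>b<n. g $ b * mpow n N b l j)
       = (\<Sum>a<n. \<Sum>b<n. f $ a * g $ b * (mpow n N a i l * mpow n N b l j))"
      by (simp add: sum_product mult_ac)
    then have "(\<Sum>l<n. (\<Sum>a<n. f $ a * mpow n N a i l) * (\<Sum>b<n. g $ b * mpow n N b l j))
       = (\<Sum>l<n. \<Sum>a<n. \<Sum>b<n. f $ a * g $ b * (mpow n N a i l * mpow n N b l j))" by simp
    also have "\<dots> = (\<Sum>a<n. \<Sum>b<n. \<Sum>l<n. f $ a * g $ b * (mpow n N a i l * mpow n N b l j))"
      by (rule sum_swap3)
    also have "\<dots> = (\<Sum>a<n. \<Sum>b<n. f $ a * g $ b * (\<Sum>l<n. mpow n N a i l * mpow n N b l j))"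
      by (simp add: sum_distrib_left)
    finally show ?thesis .
  qed
  also have "\<dots> = (\<Sum>a<n. \<Sum>b<n. ?h a b)"
    using mpow_add[OF w] by (simp add: mmul_def)
  also have "\<dots> = (\<Sum>(a,b)\<in>{..<n}\<times>{..<n}. ?h a b)"
    by (simp add: sum.cartesian_product)
  also have "\<dots> = (\<Sum>(a,b)\<in>{(a,b). a + b < n}. ?h a b)"
  proof (rule sum.mono_neutral_right)
    show "\<forall>x\<in>{..<n} \<times> {..<n} - {(a, b). a + b < n}. (case x of (a, b) \<Rightarrow> ?h a b) = 0"
    proof
      fix x assume "x \<in> {..<n} \<times> {..<n} - {(a, b). a + b < n}"
      then obtain a b where "x = (a,b)" "n \<le> a + b" by auto
      then show "(case x of (a,b) \<Rightarrow> ?h a b) = 0" using supper_mpow_big[OF s, of "a+b"] by simp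
    qed
  qed auto
  also have "\<dots> = (\<Sum>k<n. \<Sum>a\<le>k. ?h a (k - a))"
    by (rule sum.triangle_reindex)
  also have "\<dots> = (\<Sum>k<n. (f * g) $ k * mpow n N k i j)"
    by (intro sum.cong refl) (simp add: fps_mult_nth atLeast0AtMost sum_distrib_right)
  finally show "ev n N (f * g) i j = mmul n (ev n N f) (ev n N g) i j"
    by (simp add: ev_def)
qed

lemma ev_power: "supper n N \<Longrightarrow> ev n N (f ^ k) = mpow n (ev n N f) k"
  by (induct k) (simp_all add: ev_one ev_mult mpow_Suc)

lemma ev_compose:
  assumes s: "supper n N" and g0: "g $ 0 = 0"
  shows "(\<lambda>i j. \<Sum>k<n. a $ k * mpow n (ev n N g) k i j) = ev n N (a oo g)"
proof (intro ext)
  fix i j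
  have "(\<Sum>k<n. a $ k * mpow n (ev n N g) k i j) = (\<Sum>k<n. a $ k * (\<Sum>m<n. (g ^ k) $ m * mpow n N m i j))"
  proof -
    have P: "\<And>k. mpow n (ev n N g) k = ev n N (g^k)" by (simp add: ev_power[OF s])
    show ?thesis by (simp only: P) (simp add: ev_def)
  qed
  also have "\<dots> = (\<Sum>k<n. \<Sum>m<n. a $ k * (g ^ k) $ m * mpow n N m i j)"
    by (simp add: sum_distrib_left mult_ac)
  also have "\<dots> = (\<Sum>m<n. \<Sum>k<n. a $ k * (g ^ k) $ m * mpow n N m i j)"
    by (rule sum.swap)
  also have "\<dots> = (\<Sum>m<n. (a oo g) $ m * mpow n N m i j)"
  proof (intro sum.cong refl)
    fix m assume m: "m \<in> {..<n}"
    have "(\<Sum>k<n. a $ k * (g ^ k) $ m) = (\<Sum>k\<in>{0..m}. a $ k * (g ^ k) $ m)"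
    proof (rule sum.mono_neutral_right)
      show "\<forall>k\<in>{..<n} - {0..m}. a $ k * (g ^ k) $ m = 0"
        using startsby_zero_power_prefix[OF g0] by auto
    qed (use m in auto)
    then show "(\<Sum>k<n. a $ k * (g ^ k) $ m * mpow n N m i j) = (a oo g) $ m * mpow n N m i j"
      by (simp add: fps_compose_nth sum_distrib_right[symmetric])
  qed
  finally show "(\<Sum>k<n. a $ k * mpow n (ev n N g) k i j) = ev n N (a oo g) i j"
    by (simp add: ev_def)
qed

lemma mlog_ev: "mlog n U = ev n (msub U (mid n)) (fps_ln 1)"
proof (intro ext)
  fix i j
  have "mlog n U i j = (\<Sum>k\<in>{1..<n}. fps_ln 1 $ k * mpow n (msub U (mid n)) k i j)"
    unfolding mlog_def
  proof (intro sum.cong refl)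
    fix k :: nat assume "k \<in> {1..<n}"
    then obtain l where l: "k = Suc l" by (cases k) auto
    then have "(-1::'a) ^ (k + 1) = (-1) ^ (k - 1)" by simp
    then show "(-1) ^ (k + 1) / of_nat k * mpow n (msub U (mid n)) k i j
      = fps_ln 1 $ k * mpow n (msub U (mid n)) k i j"
      using \<open>k \<in> {1..<n}\<close> by (simp add: fps_ln_nth)
  qed
  also have "\<dots> = (\<Sum>k<n. fps_ln 1 $ k * mpow n (msub U (mid n)) k i j)"
    by (intro sum.mono_neutral_left) (auto simp: not_less_eq_eq)
  finally show "mlog n U i j = ev n (msub U (mid n)) (fps_ln 1) i j" by (simp add: ev_def)
qed

lemma mexp_alt: "mexp n X = (\<lambda>i j. \<Sum>k<n. fps_exp 1 $ k * mpow n X k i j)"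
  by (simp add: mexp_def)

lemma mexp_ev: "mexp n X = ev n X (fps_exp 1)"
  by (simp add: mexp_def ev_def)

lemma tr1_supper: "U \<in> Tr1 n S \<Longrightarrow> supper n (msub U (mid n))"
proof -
  assume "U \<in> Tr1 n S"
  then have a: "\<forall>i j. (n \<le> i \<or> n \<le> j) \<longrightarrow> U i j = 0" "\<forall>i<n. U i i = 1"
    "\<forall>i<n. \<forall>j<i. U i j = 0" by (auto simp: Tr1_def wfm_def)
  have "U i j = (if i = j \<and> i < n then 1 else 0)" if "j \<le> i" for i j
    using a that by (cases "i < n"; cases "j = i") auto
  then show ?thesis using a(1) unfolding supper_def wfm_def msub_def mid_def by auto
qed

lemma msub_ev_one: "U \<in> Tr1 n S \<Longrightarrow> ev n (msub U (mid n)) (1 + fps_X) = U"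
  using tr1_supper[of U n S] by (auto simp: ev_add ev_one ev_X msub_def)

lemma fps_exp_ln: "fps_exp (1::'a::field_char_0) oo fps_ln 1 = fps_X + 1"
proof -
  let ?b = "fps_exp (1::'a) - 1"
  have "?b oo fps_inv ?b = fps_X" by (rule fps_inv_right) simp_all
  then have "?b oo fps_ln 1 = fps_X" using fps_ln_fps_exp_inv[of "1::'a"] by simp
  then show ?thesis by (simp add: fps_compose_sub_distrib algebra_simps)
qed

lemma fps_ln_exp: "fps_ln (1::'a::field_char_0) oo (fps_exp 1 - 1) = fps_X"
proof -
  let ?b = "fps_exp (1::'a) - 1"
  have "fps_inv ?b oo ?b = fps_X" by (rule fps_inv) simp_all
  then show ?thesis using fps_ln_fps_exp_inv[of "1::'a"] by simp
qed

lemma exp_log: "U \<in> Tr1 n (S::'a::field_char_0 set) \<Longrightarrow> mexp n (mlog n U) = U"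
proof -
  assume U: "U \<in> Tr1 n S"
  let ?N = "msub U (mid n)"
  have s: "supper n ?N" by (rule tr1_supper[OF U])
  have "mexp n (mlog n U) = ev n ?N (fps_exp 1 oo fps_ln 1)"
    unfolding mexp_alt mlog_ev by (rule ev_compose[OF s]) simp
  also have "\<dots> = ev n ?N (1 + fps_X)" by (simp add: fps_exp_ln add.commute)
  also have "\<dots> = U" by (rule msub_ev_one[OF U])
  finally show ?thesis .
qed

lemma log_exp: "supper n (X::'a::field_char_0 sqm) \<Longrightarrow> mlog n (mexp n X) = X"
proof -
  assume s: "supper n X"
  have e: "msub (mexp n X) (mid n) = ev n X (fps_exp 1 - 1)"
    by (simp add: mexp_ev ev_diff ev_one msub_def)
  have "mlog n (mexp n X) = (\<lambda>i j. \<Sum>k<n. fps_ln 1 $ k * mpow n (ev n X (fps_exp 1 - 1)) k i j)"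
    unfolding mlog_ev e ev_def ..
  also have "\<dots> = ev n X (fps_ln 1 oo (fps_exp 1 - 1))"
    by (rule ev_compose[OF s]) simp
  also have "\<dots> = X" by (simp add: fps_ln_exp ev_X[OF s])
  finally show ?thesis .
qed

lemma exp_power:
  assumes s: "supper n (X::'a::field_char_0 sqm)"
  shows "mpow n (mexp n X) m = mexp n (\<lambda>i j. of_nat m * X i j)"
proof -
  have "mpow n (mexp n X) m = ev n X (fps_exp 1 ^ m)"
    by (simp add: mexp_ev ev_power[OF s])
  also have "\<dots> = ev n X (fps_exp (of_nat m))" by (simp add: fps_exp_power_mult)
  also have "\<dots> = ev n X (fps_exp 1 oo (fps_const (of_nat m) * fps_X))" by simp
  also have "\<dots> = mexp n (ev n X (fps_const (of_nat m) * fps_X))"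
    unfolding mexp_alt by (rule ev_compose[OF s, symmetric]) simp
  also have "ev n X (fps_const (of_nat m) * fps_X) = (\<lambda>i j. of_nat m * X i j)"
    by (simp add: ev_const_mult ev_X[OF s])
  finally show ?thesis .
qed

definition minv :: "nat \<Rightarrow> 'a::field_char_0 sqm \<Rightarrow> 'a sqm" where
  "minv n U = ev n (msub U (mid n)) (inverse (1 + fps_X))"

lemma minv_mult:
  assumes U: "U \<in> Tr1 n S"
  shows "mmul n U (minv n U) = mid n" "mmul n (minv n U) U = mid n"
proof -
  let ?N = "msub U (mid n)"
  have s: "supper n ?N" by (rule tr1_supper[OF U])
  have u: "U = ev n ?N (1 + fps_X)" using msub_ev_one[OF U] by simp
  have a: "(1 + fps_X :: 'a fps) * inverse (1 + fps_X) = 1" by (rule inverse_mult_eq_1') simp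
  have b: "inverse (1 + fps_X :: 'a fps) * (1 + fps_X) = 1" by (rule inverse_mult_eq_1) simp
  show "mmul n U (minv n U) = mid n"
    unfolding minv_def by (subst u) (simp only: ev_mult[OF s, symmetric] a ev_one)
  show "mmul n (minv n U) U = mid n"
    unfolding minv_def by (subst (2) u) (simp only: ev_mult[OF s, symmetric] b ev_one)
qed



locale padic =
  fixes p :: nat and av :: "'k::field_char_0 \<Rightarrow> real"
  assumes prime_p: "prime p" and pav: "padic_absval p av"
begin

lemma av_nonneg[simp]: "0 \<le> av x" using pav by (simp add: padic_absval_def)
lemma av_eq_0[simp]: "av x = 0 \<longleftrightarrow> x = 0" using pav by (simp add: padic_absval_def)
lemma av_mult: "av (x * y) = av x * av y" using pav by (simp add: padic_absval_def)
lemma av_ultra: "av (x + y) \<le> max (av x) (av y)" using pav by (simp add: padic_absval_def)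
lemma av_p: "av (of_nat p) = 1 / real p" using pav by (simp add: padic_absval_def)
lemma av_coprime: "coprime m (int p) \<Longrightarrow> av (of_int m) = 1" using pav by (simp add: padic_absval_def)
lemma av_dense: "e > 0 \<Longrightarrow> \<exists>q. av (x - of_rat q) < e" using pav by (simp add: padic_absval_def)

lemma av_0[simp]: "av 0 = 0" by simp
lemma av_1[simp]: "av 1 = 1"
proof -
  have "av 1 = av 1 * av 1" using av_mult[of 1 1] by simp
  then have "av 1 * (av 1 - 1) = 0" by (simp add: algebra_simps)
  moreover have "av 1 \<noteq> 0" by simp
  ultimately show ?thesis by simp
qed
lemma av_minus1: "av (-1) = 1"
proof -
  have "av (-1) * av (-1) = 1" using av_mult[of "-1" "-1"] by simp
  then have "(av (-1) - 1) * (av (-1) + 1) = 0" by (simp add: algebra_simps)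
  then show ?thesis using av_nonneg[of "-1"] by auto
qed
lemma av_minus[simp]: "av (- x) = av x"
  using av_mult[of "-1" x] av_minus1 by simp
lemma av_diff_comm: "av (x - y) = av (y - x)"
  using av_minus[of "y - x"] by simp
lemma av_add_le: "av x \<le> r \<Longrightarrow> av y \<le> r \<Longrightarrow> av (x + y) \<le> r"
  using av_ultra[of x y] by linarith
lemma av_diff_le: "av x \<le> r \<Longrightarrow> av y \<le> r \<Longrightarrow> av (x - y) \<le> r"
  using av_add_le[of x r "- y"] by simp
lemma av_tri: "av (x - z) \<le> max (av (x - y)) (av (y - z))"
  using av_ultra[of "x - y" "y - z"] by simp
lemma av_power: "av (x ^ k) = av x ^ k"
  by (induct k) (simp_all add: av_mult)
lemma av_of_nat: "av (of_nat m) \<le> 1"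
  by (induct m) (simp_all add: av_add_le)
lemma av_of_int: "av (of_int m) \<le> 1"
proof (cases m rule: int_cases)
  case (nonneg k) then show ?thesis using av_of_nat[of k] by simp
next
  case (neg k) then show ?thesis using av_of_nat[of "Suc k"] by (simp del: of_nat_Suc)
qed
lemma av_Ints: "x \<in> \<int> \<Longrightarrow> av x \<le> 1"
  by (auto elim!: Ints_cases simp: av_of_int)
lemma av_sum_le: "(\<And>x. x \<in> S \<Longrightarrow> av (f x) \<le> r) \<Longrightarrow> 0 \<le> r \<Longrightarrow> av (sum f S) \<le> r"
proof (induct S rule: infinite_finite_induct)
  case (insert x F) then show ?case by (simp add: av_add_le)
qed simp_all
lemma av_inverse: "av (inverse x) = inverse (av x)"
proof (cases "x = 0")
  case False
  then have "av x * av (inverse x) = 1" using av_mult[of x "inverse x"] by simp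
  then show ?thesis using inverse_unique[of "av x" "av (inverse x)"] by simp
qed simp
lemma av_divide: "av (x / y) = av x / av y"
  by (simp add: divide_inverse av_mult av_inverse)

lemma Zp_iff: "x \<in> Zp av \<longleftrightarrow> av x \<le> 1" by (simp add: Zp_def)
lemma Ints_Zp: "x \<in> \<int> \<Longrightarrow> x \<in> Zp av" by (simp add: Zp_iff av_Ints)
lemma Zp_add: "x \<in> Zp av \<Longrightarrow> y \<in> Zp av \<Longrightarrow> x + y \<in> Zp av" by (simp add: Zp_iff av_add_le)
lemma Zp_diff: "x \<in> Zp av \<Longrightarrow> y \<in> Zp av \<Longrightarrow> x - y \<in> Zp av" by (simp add: Zp_iff av_diff_le)
lemma Zp_mult: "x \<in> Zp av \<Longrightarrow> y \<in> Zp av \<Longrightarrow> x * y \<in> Zp av"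
  by (simp add: Zp_iff av_mult mult_le_one)
lemma Zp_0: "0 \<in> Zp av" by (simp add: Zp_iff)
lemma Zp_1: "1 \<in> Zp av" by (simp add: Zp_iff)

lemma p_gt1: "1 < p" using prime_p prime_gt_1_nat by blast

lemma small_pow: "e > 0 \<Longrightarrow> \<exists>K. (1 / real p) ^ K < e"
  using real_arch_pow_inv[of e "1 / real p"] p_gt1 by auto

lemma av_p_pow: "av (of_nat (p ^ K)) = (1 / real p) ^ K"
  by (simp only: of_nat_power av_power av_p)

lemma scale_into_Zp: "\<exists>K. av (of_nat (p ^ K) * x) \<le> 1"
proof (cases "x = 0")
  case True then show ?thesis by simp
next
  case False
  then have "av x > 0" using av_nonneg[of x] av_eq_0[of x] by linarith
  then obtain K where K: "(1 / real p) ^ K < 1 / av x" using small_pow[of "1 / av x"] by auto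
  have "av (of_nat (p ^ K) * x) = (1 / real p) ^ K * av x" by (simp only: av_mult av_p_pow)
  also have "\<dots> \<le> 1" using K \<open>av x > 0\<close> by (simp add: field_simps)
  finally show ?thesis by blast
qed

lemma dense_nat:
  assumes x: "av x \<le> 1" and e: "e > 0"
  shows "\<exists>m::nat. av (x - of_nat m) < e"
proof -
  obtain K where K: "(1 / real p) ^ K < e" using small_pow[OF e] by auto
  obtain q where q: "av (x - of_rat q) < min e 1" using av_dense[of "min e 1" x] e by auto
  have qZ: "av (of_rat q :: 'k) \<le> 1"
  proof -
    have "av (x - (x - of_rat q)) \<le> 1" using av_diff_le[of x 1 "x - of_rat q"] x q by linarith
    then show ?thesis by simp
  qed
  obtain a b where ab: "quotient_of q = (a, b)" by (cases "quotient_of q") auto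
  have b0: "b > 0" using quotient_of_denom_pos[OF ab] .
  have cop: "coprime a b" using quotient_of_coprime[OF ab] .
  have qab: "(of_rat q :: 'k) = of_int a / of_int b"
    using quotient_of_div[OF ab] by (simp add: of_rat_divide)
  have pint: "prime (int p)" using prime_p by simp
  have ndvd: "\<not> int p dvd b"
  proof
    assume pb: "int p dvd b"
    then obtain b' where b': "b = int p * b'" by (auto elim: dvdE)
    have "\<not> int p dvd a"
    proof
      assume "int p dvd a"
      with pb have "int p dvd gcd a b" by simp
      with cop pint show False by (simp add: not_prime_unit)
    qed
    then have "coprime a (int p)" using prime_imp_coprime[OF pint] by (simp add: coprime_commute)
    then have aa: "av (of_int a :: 'k) = 1" by (rule av_coprime)
    have bb: "av (of_int b :: 'k) \<le> 1 / real p"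
      using av_of_int[of b'] by (simp add: b' av_mult av_p mult_le_one divide_le_eq)
    have "(of_int b::'k) \<noteq> 0" using b0 by simp
    then have "av (of_int b :: 'k) \<noteq> 0" by simp
    then have bpos: "av (of_int b :: 'k) > 0" using av_nonneg[of "of_int b"] by linarith
    have "av (of_rat q :: 'k) = 1 / av (of_int b :: 'k)" by (simp add: qab av_divide aa)
    also have "\<dots> \<ge> real p" using bb bpos p_gt1
      by (simp add: field_simps)
    finally have "av (of_rat q :: 'k) \<ge> real p" .
    with qZ p_gt1 show False by simp
  qed
  define P :: int where "P = int p ^ K"
  have P0: "P > 0" using p_gt1 by (simp add: P_def)
  have "coprime b P" unfolding P_def using prime_imp_power_coprime[OF pint ndvd] .
  then have "gcd b P = 1" by simp
  then obtain u v where uv: "u * b + v * P = 1" using bezout_int[of b P] by auto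
  define m0 where "m0 = (a * u) mod P"
  define k where "k = (a * u) div P"
  have m0nn: "m0 \<ge> 0" using P0 by (simp add: m0_def)
  have au: "a * u = P * k + m0" by (simp add: m0_def k_def)
  have key: "a - b * m0 = P * (a * v + b * k)"
  proof -
    have "a - b * m0 = a - b * (a * u - P * k)" using au by simp
    also have "\<dots> = a * (1 - u * b) + b * P * k" by (simp add: algebra_simps)
    also have "1 - u * b = v * P" using uv by simp
    finally show ?thesis by (simp add: algebra_simps)
  qed
  have avb: "av (of_int b :: 'k) = 1"
    using av_coprime[of b] prime_imp_coprime[OF pint ndvd] by (simp add: coprime_commute)
  have "(of_rat q :: 'k) - of_nat (nat m0) = of_int (a - b * m0) / of_int b"
    using b0 m0nn by (simp add: qab field_simps)
  also have "\<dots> = of_int P * of_int (a * v + b * k) / of_int b" by (simp add: key)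
  finally have "av ((of_rat q :: 'k) - of_nat (nat m0)) = av (of_int P :: 'k) * av (of_int (a * v + b * k) :: 'k)"
    by (simp add: av_divide av_mult avb)
  also have "\<dots> \<le> av (of_int P :: 'k)"
    using av_of_int[of "a * v + b * k"] by (simp add: mult_left_le)
  also have "av (of_int P :: 'k) = (1 / real p) ^ K"
    using av_p_pow[of K] by (simp add: P_def)
  finally have "av ((of_rat q :: 'k) - of_nat (nat m0)) < e" using K by linarith
  then have "av (x - of_nat (nat m0)) < e"
    using av_tri[of x "of_nat (nat m0)" "of_rat q"] q by linarith
  then show ?thesis by blast
qed

end


context padic
begin

definition mbd :: "nat \<Rightarrow> 'k sqm \<Rightarrow> real \<Rightarrow> bool" where
  "mbd n M r \<longleftrightarrow> (\<forall>i<n. \<forall>j<n. av (M i j) \<le> r)"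

lemma mbd_mono: "mbd n M r \<Longrightarrow> r \<le> s \<Longrightarrow> mbd n M s"
  by (auto simp: mbd_def intro: order_trans)

lemma mbd_mid: "mbd n (mid n) 1" by (simp add: mbd_def mid_def)

lemma mbd_mmul: "mbd n A r \<Longrightarrow> mbd n B s \<Longrightarrow> 0 \<le> r \<Longrightarrow> 0 \<le> s \<Longrightarrow> mbd n (mmul n A B) (r * s)"
  unfolding mbd_def mmul_def
  by (auto simp: av_mult intro!: av_sum_le mult_mono)

lemma mbd_mmul_diff:
  assumes a: "mbd n A R1" "mbd n B' R2" "mbd n (msub A A') d1" "mbd n (msub B B') d2"
    and p: "0 \<le> R1" "0 \<le> R2" "0 \<le> d1" "0 \<le> d2"
  shows "mbd n (msub (mmul n A B) (mmul n A' B')) (max (R1 * d2) (d1 * R2))"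
  unfolding mbd_def
proof (intro allI impI)
  fix i j assume ij: "i < n" "j < n"
  have "msub (mmul n A B) (mmul n A' B') i j = (\<Sum>l<n. A i l * msub B B' l j + msub A A' i l * B' l j)"
    by (simp add: msub_def mmul_def sum_subtractf[symmetric] algebra_simps)
  also have "av \<dots> \<le> max (R1 * d2) (d1 * R2)"
  proof (rule av_sum_le)
    fix l assume l: "l \<in> {..<n}"
    have "av (A i l * msub B B' l j) \<le> R1 * d2"
      using a l ij p unfolding mbd_def by (auto simp: av_mult intro!: mult_mono)
    moreover have "av (msub A A' i l * B' l j) \<le> d1 * R2"
      using a l ij p unfolding mbd_def by (auto simp: av_mult intro!: mult_mono)
    ultimately show "av (A i l * msub B B' l j + msub A A' i l * B' l j) \<le> max (R1 * d2) (d1 * R2)"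
      by (intro av_add_le) auto
  qed (use p in \<open>auto simp: le_max_iff_disj\<close>)
  finally show "av (msub (mmul n A B) (mmul n A' B') i j) \<le> max (R1 * d2) (d1 * R2)" .
qed

lemma mbd_mpow: "mbd n A R \<Longrightarrow> 0 \<le> R \<Longrightarrow> mbd n (mpow n A k) (R ^ k)"
  by (induct k) (simp_all add: mbd_mid mpow_Suc mbd_mmul)

lemma mbd_mpow_diff:
  assumes a: "mbd n A R" "mbd n B R" "1 \<le> R" "mbd n (msub A B) d" "0 \<le> d"
  shows "mbd n (msub (mpow n A k) (mpow n B k)) (R ^ k * d)"
proof (induct k)
  case 0 then show ?case using a by (simp add: mbd_def msub_def)
next
  case (Suc k)
  have Bk: "mbd n (mpow n B k) (R ^ k)" using mbd_mpow[OF a(2)] a(3) by simp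
  have "mbd n (msub (mmul n A (mpow n A k)) (mmul n B (mpow n B k))) (max (R * (R ^ k * d)) (d * R ^ k))"
    by (rule mbd_mmul_diff[OF a(1) Bk a(4) Suc]) (use a in auto)
  moreover have "max (R * (R ^ k * d)) (d * R ^ k) \<le> R ^ Suc k * d"
  proof -
    have "0 \<le> d * R ^ k" using a(3,5) by simp
    then have "1 * (d * R ^ k) \<le> R * (d * R ^ k)" using a(3) by (rule mult_right_mono[rotated])
    then have "d * R ^ k \<le> R * (R ^ k * d)" by (simp add: mult_ac)
    then show ?thesis by (simp add: mult_ac)
  qed
  ultimately show ?case by (simp add: mpow_Suc mbd_mono)
qed

lemma mbd_sum:
  assumes "\<And>k. k \<in> S \<Longrightarrow> mbd n (F k) (r k)" "\<And>k. k \<in> S \<Longrightarrow> 0 \<le> r k"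
  shows "mbd n (\<lambda>i j. \<Sum>k\<in>S. F k i j) (\<Sum>k\<in>S. r k)"
  unfolding mbd_def
proof (intro allI impI)
  fix i j assume ij: "i < n" "j < n"
  show "av (\<Sum>k\<in>S. F k i j) \<le> (\<Sum>k\<in>S. r k)"
  proof (cases "finite S")
    case True
    show ?thesis
    proof (rule av_sum_le)
      fix k assume k: "k \<in> S"
      have "av (F k i j) \<le> r k" using assms(1)[OF k] ij by (simp add: mbd_def)
      also have "\<dots> \<le> (\<Sum>k\<in>S. r k)" using True k assms(2) by (intro member_le_sum) auto
      finally show "av (F k i j) \<le> (\<Sum>k\<in>S. r k)" .
    qed (use assms(2) in \<open>simp add: sum_nonneg\<close>)
  qed simp
qed

lemma mbd_sum_max:
  assumes "\<And>k. k \<in> S \<Longrightarrow> mbd n (F k) r" "0 \<le> r"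
  shows "mbd n (\<lambda>i j. \<Sum>k\<in>S. F k i j) r"
  using assms unfolding mbd_def by (auto intro!: av_sum_le)

lemma mbd_scale: "mbd n M r \<Longrightarrow> mbd n (\<lambda>i j. c * M i j) (av c * r)"
  by (auto simp: mbd_def av_mult intro: mult_left_mono)

lemma mbd_nonneg: "mbd n M r \<Longrightarrow> 0 < n \<Longrightarrow> 0 \<le> r"
  unfolding mbd_def by (meson av_nonneg order_trans)

lemma mbd_ev: "mbd n A R \<Longrightarrow> 0 \<le> R \<Longrightarrow> mbd n (ev n A f) (\<Sum>k<n. av (f $ k) * R ^ k)"
  unfolding ev_def
  by (rule mbd_sum) (auto intro!: mbd_scale mbd_mpow)

lemma mbd_ev_diff:
  assumes a: "mbd n A R" "mbd n B R" "1 \<le> R" "mbd n (msub A B) d" "0 \<le> d"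
  shows "mbd n (msub (ev n A f) (ev n B f)) ((\<Sum>k<n. av (f $ k) * R ^ k) * d)"
proof -
  have e: "msub (ev n A f) (ev n B f) = (\<lambda>i j. \<Sum>k<n. f $ k * msub (mpow n A k) (mpow n B k) i j)"
    by (simp add: ev_def msub_def sum_subtractf[symmetric] algebra_simps)
  have "mbd n (\<lambda>i j. \<Sum>k<n. f $ k * msub (mpow n A k) (mpow n B k) i j) (\<Sum>k<n. av (f $ k) * (R ^ k * d))"
    using a by (intro mbd_sum mbd_scale mbd_mpow_diff) auto
  then show ?thesis unfolding e by (simp add: sum_distrib_right sum_distrib_left mult_ac)
qed

lemma av_small_zero: "(\<And>e. e > 0 \<Longrightarrow> av x \<le> e) \<Longrightarrow> x = 0"
proof (rule ccontr)
  assume h: "\<And>e. e > 0 \<Longrightarrow> av x \<le> e" and x: "x \<noteq> 0"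
  then have "av x > 0" using av_nonneg[of x] av_eq_0[of x] by linarith
  then show False using h[of "av x / 2"] by simp
qed

lemma mbd_zero: "wfm n X \<Longrightarrow> (\<And>e. e > 0 \<Longrightarrow> mbd n X e) \<Longrightarrow> X = (\<lambda>i j. 0)"
proof (intro ext)
  fix i j assume w: "wfm n X" and h: "\<And>e. e > 0 \<Longrightarrow> mbd n X e"
  show "X i j = 0"
  proof (cases "i < n \<and> j < n")
    case True then show ?thesis using h by (intro av_small_zero) (auto simp: mbd_def)
  next
    case False then show ?thesis using w by (auto simp: wfm_def)
  qed
qed

lemma wfm_msub: "wfm n A \<Longrightarrow> wfm n B \<Longrightarrow> wfm n (msub A B)"
  by (simp add: wfm_def msub_def)

lemma mbd_eq: "wfm n A \<Longrightarrow> wfm n B \<Longrightarrow> (\<And>e. e > 0 \<Longrightarrow> mbd n (msub A B) e) \<Longrightarrow> A = B"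
proof -
  assume "wfm n A" "wfm n B" "\<And>e. e > 0 \<Longrightarrow> mbd n (msub A B) e"
  then have "msub A B = (\<lambda>i j. 0)" by (intro mbd_zero wfm_msub)
  then show "A = B" by (auto simp: fun_eq_iff msub_def dest: fun_cong)
qed

lemma mbd_tri: "mbd n (msub A B) d1 \<Longrightarrow> mbd n (msub B C) d2 \<Longrightarrow> mbd n (msub A C) (max d1 d2)"
  unfolding mbd_def msub_def using av_tri by (meson max.mono order_trans)

lemma mbd_sym: "mbd n (msub A B) d \<Longrightarrow> mbd n (msub B A) d"
  unfolding mbd_def msub_def by (simp add: av_diff_comm)

lemma tr1_mbd: "U \<in> Tr1 n (Zp av) \<Longrightarrow> mbd n U 1"
  by (auto simp: Tr1_def mbd_def Zp_iff)

lemma tr1_mbd_N: "U \<in> Tr1 n (Zp av) \<Longrightarrow> mbd n (msub U (mid n)) 1"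
  by (auto simp: Tr1_def mbd_def Zp_iff msub_def mid_def intro: av_diff_le)

lemma Tr1_mono: "S \<subseteq> T \<Longrightarrow> Tr1 n S \<subseteq> Tr1 n T"
  by (auto simp: Tr1_def)

lemma Tr1_Ints_Zp: "Tr1 n \<int> \<subseteq> Tr1 n (Zp av)"
  using Tr1_mono Ints_Zp by blast

lemma tr1_wfm: "U \<in> Tr1 n S \<Longrightarrow> wfm n U" by (simp add: Tr1_def)

definition near :: "nat \<Rightarrow> 'k sqm set \<Rightarrow> 'k sqm \<Rightarrow> bool" where
  "near n S M \<longleftrightarrow> (\<forall>e>0. \<exists>g\<in>S. mbd n (msub M g) e)"

lemma pclosure_iff: "M \<in> pclosure av n S \<longleftrightarrow> M \<in> Tr1 n (Zp av) \<and> near n S M"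
proof
  assume M: "M \<in> pclosure av n S"
  have "near n S M" unfolding near_def
  proof (intro allI impI)
    fix e :: real assume "e > 0"
    then obtain g where "g \<in> S" "\<forall>i<n. \<forall>j<n. av (M i j - g i j) < e"
      using M by (auto simp: pclosure_def)
    then show "\<exists>g\<in>S. mbd n (msub M g) e" unfolding mbd_def msub_def by (meson less_imp_le)
  qed
  then show "M \<in> Tr1 n (Zp av) \<and> near n S M" using M by (simp add: pclosure_def)
next
  assume M: "M \<in> Tr1 n (Zp av) \<and> near n S M"
  have "\<exists>g\<in>S. \<forall>i<n. \<forall>j<n. av (M i j - g i j) < e" if e: "e > 0" for e
  proof -
    have "\<exists>g\<in>S. mbd n (msub M g) (e/2)" using M e unfolding near_def by simp
    then obtain g where "g \<in> S" "mbd n (msub M g) (e/2)" by blast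
    then show ?thesis using e by (force simp: mbd_def msub_def)
  qed
  then show "M \<in> pclosure av n S" using M by (simp add: pclosure_def)
qed

lemma closure_tr1:
  assumes w: "wfm n M" and nr: "near n S M" and S: "S \<subseteq> Tr1 n (Zp av)"
  shows "M \<in> Tr1 n (Zp av)"
proof -
  have ap: "\<exists>g\<in>Tr1 n (Zp av). av (M i j - g i j) \<le> e" if "i < n" "j < n" "e > 0" for i j e
  proof -
    have "\<exists>g\<in>S. mbd n (msub M g) e" using nr that unfolding near_def by simp
    then obtain g where "g \<in> S" "mbd n (msub M g) e" by blast
    then show ?thesis using S that by (auto simp: mbd_def msub_def)
  qed
  have diag: "M i i = 1" if ii: "i < n" for i
  proof -
    have "M i i - 1 = 0"
    proof (rule av_small_zero)
      fix e :: real assume "e > 0"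
      then obtain g where "g \<in> Tr1 n (Zp av)" "av (M i i - g i i) \<le> e" using ap ii by blast
      then show "av (M i i - 1) \<le> e" using ii by (simp add: Tr1_def)
    qed
    then show ?thesis by simp
  qed
  have low: "M i j = 0" if ij: "i < n" "j < i" for i j
  proof (rule av_small_zero)
    fix e :: real assume "e > 0"
    moreover have "j < n" using ij by simp
    ultimately obtain g where "g \<in> Tr1 n (Zp av)" "av (M i j - g i j) \<le> e" using ap ij by blast
    then show "av (M i j) \<le> e" using ij by (simp add: Tr1_def)
  qed
  have zp: "M i j \<in> Zp av" if ij: "i < n" "j < n" for i j
  proof -
    obtain g where g: "g \<in> Tr1 n (Zp av)" "av (M i j - g i j) \<le> 1" using ap ij by force
    then have "av (g i j) \<le> 1" using ij by (simp add: Tr1_def Zp_iff)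
    then have "av ((M i j - g i j) + g i j) \<le> 1" using g by (intro av_add_le) auto
    then show ?thesis by (simp add: Zp_iff)
  qed
  show ?thesis using w diag low zp by (simp add: Tr1_def)
qed

lemma closure_mem: "wfm n M \<Longrightarrow> near n S M \<Longrightarrow> S \<subseteq> Tr1 n (Zp av) \<Longrightarrow> M \<in> pclosure av n S"
  using closure_tr1 pclosure_iff by blast

lemma near_self: "g \<in> S \<Longrightarrow> near n S g"
  unfolding near_def by (intro allI impI bexI[of _ g]) (auto simp: mbd_def msub_def)

lemma subset_closure: "S \<subseteq> Tr1 n (Zp av) \<Longrightarrow> S \<subseteq> pclosure av n S"
  using pclosure_iff near_self by blast

lemma closure_mono: "S \<subseteq> T \<Longrightarrow> pclosure av n S \<subseteq> pclosure av n T"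
  by (auto simp: pclosure_def) (meson subsetD)

end


lemma supper_log: "U \<in> Tr1 n (S::'a::field_char_0 set) \<Longrightarrow> supper n (mlog n U)"
  unfolding mlog_ev by (rule supper_ev[OF tr1_supper]) auto

lemma supper_scale: "supper n (X::'a::comm_ring_1 sqm) \<Longrightarrow> supper n (\<lambda>i j. c * X i j)"
  by (auto simp: supper_def wfm_def)

lemma wfm_msub0: "wfm n A \<Longrightarrow> wfm n B \<Longrightarrow> wfm n (msub A B)"
  by (simp add: wfm_def msub_def)

lemma supper_wfm: "supper n X \<Longrightarrow> wfm n X" by (simp add: supper_def)

lemma wfm_mexp: "wfm n X \<Longrightarrow> wfm n (mexp n X)"
  unfolding mexp_ev by (rule wfm_ev)

lemma wfm_mlog: "wfm n U \<Longrightarrow> wfm n (mlog n U)"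
  unfolding mlog_ev by (rule wfm_ev) (simp add: wfm_msub0)

lemma mexp_tr1: "supper n (X::'a::field_char_0 sqm) \<Longrightarrow> mexp n X \<in> Tr1 n UNIV"
proof -
  assume s: "supper n X"
  have "mexp n X = (\<lambda>i j. mid n i j + ev n X (fps_exp 1 - 1) i j)"
    by (simp add: mexp_ev ev_diff ev_one)
  moreover have "supper n (ev n X (fps_exp 1 - 1))" by (rule supper_ev[OF s]) simp
  ultimately show ?thesis
    by (auto simp: Tr1_def supper_def wfm_def mid_def)
qed

lemma minv_unique:
  assumes U: "U \<in> Tr1 n S" and w: "wfm n g'" and m: "mmul n U g' = mid n"
  shows "g' = minv n U"
proof -
  have wi: "wfm n (minv n U)" unfolding minv_def
    by (rule wfm_ev) (use tr1_supper[OF U] in \<open>simp add: supper_def\<close>)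
  have "g' = mmul n (mmul n (minv n U) U) g'" using minv_mult(2)[OF U] mmul_mid_left[OF w] by simp
  also have "\<dots> = mmul n (minv n U) (mmul n U g')" by (rule mmul_assoc)
  also have "\<dots> = minv n U" using m mmul_mid_right[OF wi] by simp
  finally show ?thesis .
qed

lemma group_mpow: "is_mgroup n G \<Longrightarrow> g \<in> G \<Longrightarrow> mpow n g m \<in> G"
  by (induct m) (auto simp: is_mgroup_def mpow_Suc)

context padic
begin

definition CL :: "nat \<Rightarrow> real" where "CL n = (\<Sum>k<n. av (fps_ln 1 $ k))"
definition CE :: "nat \<Rightarrow> real \<Rightarrow> real" where "CE n R = (\<Sum>k<n. av (fps_exp 1 $ k) * R ^ k)"
definition CI :: "nat \<Rightarrow> real" where "CI n = (\<Sum>k<n. av (inverse (1 + fps_X) $ k))"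

lemma CL_nonneg: "0 \<le> CL n" by (simp add: CL_def sum_nonneg)
lemma CI_nonneg: "0 \<le> CI n" by (simp add: CI_def sum_nonneg)
lemma CE_nonneg: "0 \<le> R \<Longrightarrow> 0 \<le> CE n R" by (simp add: CE_def sum_nonneg)

lemma msub_N: "msub (msub U (mid n)) (msub V (mid n)) = msub U V"
  by (simp add: msub_def)

lemma log_lip:
  assumes "U \<in> Tr1 n (Zp av)" "V \<in> Tr1 n (Zp av)" "mbd n (msub U V) d" "0 \<le> d"
  shows "mbd n (msub (mlog n U) (mlog n V)) (CL n * d)"
  using mbd_ev_diff[of n "msub U (mid n)" 1 "msub V (mid n)" d "fps_ln 1"] assms
  by (simp add: mlog_ev msub_N tr1_mbd_N CL_def)

lemma log_bd: "U \<in> Tr1 n (Zp av) \<Longrightarrow> mbd n (mlog n U) (CL n)"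
  using mbd_ev[of n "msub U (mid n)" 1 "fps_ln 1"] by (simp add: mlog_ev tr1_mbd_N CL_def)

lemma exp_lip:
  assumes "mbd n X R" "mbd n Y R" "1 \<le> R" "mbd n (msub X Y) d" "0 \<le> d"
  shows "mbd n (msub (mexp n X) (mexp n Y)) (CE n R * d)"
  using mbd_ev_diff[OF assms, of "fps_exp 1"] by (simp add: mexp_ev CE_def)

lemma minv_lip:
  assumes "U \<in> Tr1 n (Zp av)" "V \<in> Tr1 n (Zp av)" "mbd n (msub U V) d" "0 \<le> d"
  shows "mbd n (msub (minv n U) (minv n V)) (CI n * d)"
  using mbd_ev_diff[of n "msub U (mid n)" 1 "msub V (mid n)" d "inverse (1 + fps_X)"] assms
  by (simp add: minv_def msub_N tr1_mbd_N CI_def)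

lemma small_div: "0 \<le> (C::real) \<Longrightarrow> 0 < e \<Longrightarrow> C * (e / (C + 1)) \<le> e"
proof -
  assume C: "0 \<le> C" and e: "0 < e"
  have "C * (e / (C + 1)) = (C * e) / (C + 1)" by simp
  also have "\<dots> \<le> e" using C e by (simp add: pos_divide_le_eq algebra_simps)
  finally show ?thesis .
qed

lemma closure_group:
  assumes G: "is_mgroup n G" "G \<subseteq> Tr1 n (Zp av)"
  shows "is_mgroup n (pclosure av n G)"
proof -
  have sub: "pclosure av n G \<subseteq> Tr1 n (Zp av)" by (auto simp: pclosure_def)
  have "pclosure av n G \<subseteq> {M. wfm n M}" using sub by (auto simp: Tr1_def)
  moreover have "mid n \<in> pclosure av n G"
    using G subset_closure[OF G(2)] by (auto simp: is_mgroup_def)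
  moreover have "mmul n a b \<in> pclosure av n G" if a: "a \<in> pclosure av n G" and b: "b \<in> pclosure av n G" for a b
  proof (rule closure_mem[OF _ _ G(2)])
    show "wfm n (mmul n a b)" using a b sub by (intro wfm_mmul) (auto simp: Tr1_def)
    show "near n G (mmul n a b)" unfolding near_def
    proof (intro allI impI)
      fix e :: real assume e: "e > 0"
      obtain g where g: "g \<in> G" "mbd n (msub a g) e" using a e by (auto simp: pclosure_iff near_def)
      obtain h where h: "h \<in> G" "mbd n (msub b h) e" using b e by (auto simp: pclosure_iff near_def)
      have "mbd n (msub (mmul n a b) (mmul n g h)) (max (1 * e) (e * 1))"
        by (rule mbd_mmul_diff) (use a h g sub G(2) e in \<open>auto intro: tr1_mbd\<close>)
      moreover have "mmul n g h \<in> G" using G g h by (auto simp: is_mgroup_def)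
      ultimately show "\<exists>g\<in>G. mbd n (msub (mmul n a b) g) e" by auto
    qed
  qed
  moreover have "\<exists>b\<in>pclosure av n G. mmul n a b = mid n" if a: "a \<in> pclosure av n G" for a
  proof
    have aT: "a \<in> Tr1 n (Zp av)" using a sub by auto
    show "mmul n a (minv n a) = mid n" by (rule minv_mult(1)[OF aT])
    show "minv n a \<in> pclosure av n G"
    proof (rule closure_mem[OF _ _ G(2)])
      show "wfm n (minv n a)" unfolding minv_def
        by (rule wfm_ev) (use tr1_supper[OF aT] in \<open>simp add: supper_def\<close>)
      show "near n G (minv n a)" unfolding near_def
      proof (intro allI impI)
        fix e :: real assume e: "e > 0"
        define d where "d = e / (CI n + 1)"
        have d: "d > 0" using e CI_nonneg[of n] by (simp add: d_def)
        obtain g where g: "g \<in> G" "mbd n (msub a g) d" using a d by (auto simp: pclosure_iff near_def)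
        have gT: "g \<in> Tr1 n (Zp av)" using g G by auto
        obtain g' where g': "g' \<in> G" "mmul n g g' = mid n" using G g by (auto simp: is_mgroup_def)
        have "g' = minv n g" by (rule minv_unique[OF gT]) (use g' G in \<open>auto simp: is_mgroup_def\<close>)
        moreover have "mbd n (msub (minv n a) (minv n g)) (CI n * d)"
          by (rule minv_lip[OF aT gT g(2)]) (use d in simp)
        moreover have "CI n * d \<le> e" unfolding d_def by (rule small_div[OF CI_nonneg e])
        ultimately show "\<exists>g\<in>G. mbd n (msub (minv n a) g) e" using g' by (auto intro: mbd_mono)
      qed
    qed
  qed
  ultimately show ?thesis by (simp add: is_mgroup_def)
qed

lemma zp_power:
  assumes G: "is_mgroup n G" "G \<subseteq> Tr1 n (Zp av)"
    and g: "g \<in> pclosure av n G" and u: "av u \<le> 1"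
  shows "mexp n (\<lambda>i j. u * mlog n g i j) \<in> pclosure av n G"
proof (rule closure_mem[OF _ _ G(2)])
  have gT: "g \<in> Tr1 n (Zp av)" using g by (simp add: pclosure_iff)
  have sY: "supper n (\<lambda>i j. u * mlog n g i j)" by (intro supper_scale supper_log[OF gT])
  show "wfm n (mexp n (\<lambda>i j. u * mlog n g i j))" by (intro wfm_mexp supper_wfm sY)
  show "near n G (mexp n (\<lambda>i j. u * mlog n g i j))" unfolding near_def
  proof (intro allI impI)
    fix e :: real assume e: "e > 0"
    define R where "R = max 1 (CL n)"
    have R1: "1 \<le> R" and RL: "CL n \<le> R" by (auto simp: R_def)
    define \<eta> where "\<eta> = e / (CE n R + 1)"
    have \<eta>: "\<eta> > 0" using e CE_nonneg[of R n] R1 by (simp add: \<eta>_def)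
    define d where "d = \<eta> / (CL n + 1)"
    have d: "d > 0" using \<eta> CL_nonneg[of n] by (simp add: d_def)
    have Ld: "CL n * d \<le> \<eta>" unfolding d_def by (rule small_div[OF CL_nonneg \<eta>])
    obtain \<gamma> where \<gamma>: "\<gamma> \<in> G" "mbd n (msub g \<gamma>) d" using g d by (auto simp: pclosure_iff near_def)
    have \<gamma>T: "\<gamma> \<in> Tr1 n (Zp av)" using \<gamma> G by auto
    obtain m :: nat where m: "av (u - of_nat m) < d" using dense_nat[OF u d] by auto
    define Y' where "Y' = (\<lambda>i j. of_nat m * mlog n \<gamma> i j)"
    have "mbd n (msub (mlog n g) (mlog n \<gamma>)) (CL n * d)"
      by (rule log_lip[OF gT \<gamma>T \<gamma>(2)]) (use d in simp)
    then have A: "mbd n (msub (mlog n g) (mlog n \<gamma>)) \<eta>" using Ld by (rule mbd_mono)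
    have B: "mbd n (mlog n \<gamma>) (CL n)" by (rule log_bd[OF \<gamma>T])
    have diff: "mbd n (msub (\<lambda>i j. u * mlog n g i j) Y') \<eta>"
      unfolding mbd_def
    proof (intro allI impI)
      fix i j assume ij: "i < n" "j < n"
      have eq: "msub (\<lambda>i j. u * mlog n g i j) Y' i j
          = u * msub (mlog n g) (mlog n \<gamma>) i j + (u - of_nat m) * mlog n \<gamma> i j"
        by (simp add: msub_def Y'_def algebra_simps)
      have "av (msub (mlog n g) (mlog n \<gamma>) i j) \<le> \<eta>" using A ij by (simp add: mbd_def)
      then have "av u * av (msub (mlog n g) (mlog n \<gamma>) i j) \<le> 1 * \<eta>"
        using u \<eta> by (intro mult_mono) auto
      then have "av (u * msub (mlog n g) (mlog n \<gamma>) i j) \<le> 1 * \<eta>" by (simp add: av_mult)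
      moreover have "av ((u - of_nat m) * mlog n \<gamma> i j) \<le> d * CL n"
      proof -
        have "av (mlog n \<gamma> i j) \<le> CL n" using B ij by (simp add: mbd_def)
        then have "av (u - of_nat m) * av (mlog n \<gamma> i j) \<le> d * CL n"
          using m d by (intro mult_mono) auto
        then show ?thesis by (simp add: av_mult)
      qed
      moreover have "d * CL n \<le> \<eta>" using Ld by (simp add: mult.commute)
      ultimately show "av (msub (\<lambda>i j. u * mlog n g i j) Y' i j) \<le> \<eta>"
        unfolding eq by (intro av_add_le) auto
    qed
    have bY: "mbd n (\<lambda>i j. u * mlog n g i j) R"
      using mbd_scale[OF log_bd[OF gT], of u] u RL CL_nonneg[of n]
      by (elim mbd_mono) (simp add: mult_le_one order_trans[OF mult_right_mono[OF u]])
    have bY': "mbd n Y' R"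
      using mbd_scale[OF B, of "of_nat m"] av_of_nat[of m] RL CL_nonneg[of n] unfolding Y'_def
      by (elim mbd_mono) (simp add: order_trans[OF mult_right_mono[OF av_of_nat]])
    have "mbd n (msub (mexp n (\<lambda>i j. u * mlog n g i j)) (mexp n Y')) (CE n R * \<eta>)"
      by (rule exp_lip[OF bY bY' R1 diff]) (use \<eta> in simp)
    moreover have "CE n R * \<eta> \<le> e" unfolding \<eta>_def by (rule small_div[OF CE_nonneg e]) (use R1 in simp)
    moreover have "mexp n Y' = mpow n \<gamma> m"
      unfolding Y'_def using exp_power[OF supper_log[OF \<gamma>T], of m] exp_log[OF \<gamma>T] by simp
    moreover have "mpow n \<gamma> m \<in> G" by (rule group_mpow[OF G(1) \<gamma>(1)])
    ultimately show "\<exists>h\<in>G. mbd n (msub (mexp n (\<lambda>i j. u * mlog n g i j)) h) e"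
      by (auto intro: mbd_mono)
  qed
qed

end


lemma sum_fun_apply2: "(sum F S :: 'a \<Rightarrow> 'b \<Rightarrow> 'c::comm_monoid_add) i j = (\<Sum>s\<in>S. F s i j)"
  by (induct S rule: infinite_finite_induct) auto

definition sQ :: "rat \<Rightarrow> 'k::field_char_0 sqm \<Rightarrow> 'k sqm" where
  "sQ q M = (\<lambda>i j. of_rat q * M i j)"

lemma vs_sQ: "vector_space (sQ :: rat \<Rightarrow> 'k::field_char_0 sqm \<Rightarrow> 'k sqm)"
  unfolding vector_space_def sQ_def
  by (auto simp: fun_eq_iff algebra_simps of_rat_add of_rat_mult)

lemma mod_sQ: "module (sQ :: rat \<Rightarrow> 'k::field_char_0 sqm \<Rightarrow> 'k sqm)"
  unfolding module_def sQ_def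
  by (auto simp: fun_eq_iff algebra_simps of_rat_add of_rat_mult)

lemma vs_rat: "vector_space ((*) :: rat \<Rightarrow> rat \<Rightarrow> rat)"
  unfolding vector_space_def by (auto simp: algebra_simps)

lemma int_multiple:
  assumes "finite t"
  shows "\<exists>D::int. D > 0 \<and> (\<forall>v\<in>t. \<exists>z::int. of_int D * u v = (of_int z :: rat))"
proof -
  define D where "D = (\<Prod>v\<in>t. snd (quotient_of (u v)))"
  have "D > 0" unfolding D_def
    by (intro prod_pos) (metis prod.collapse quotient_of_denom_pos)
  moreover have "\<exists>z::int. of_int D * u v = (of_int z :: rat)" if v: "v \<in> t" for v
  proof -
    obtain a b where ab: "quotient_of (u v) = (a, b)" by (cases "quotient_of (u v)") auto
    have "b dvd D" unfolding D_def using dvd_prodI[OF assms v, of "\<lambda>v. snd (quotient_of (u v))"] ab by simp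
    then obtain k where k: "D = b * k" by (auto elim: dvdE)
    have b0: "b \<noteq> 0" using quotient_of_denom_pos[OF ab] by simp
    have "of_int D * u v = of_int (b * k) * (of_int a / of_int b)" using quotient_of_div[OF ab] k by simp
    also have "\<dots> = of_int (k * a)" using b0 by (simp add: field_simps)
    finally show ?thesis by blast
  qed
  ultimately show ?thesis by blast
qed

lemma indep_sQ:
  fixes B :: "'k::field_char_0 sqm set"
  assumes fin: "finite B" and ci: "c_indep \<int> B"
  shows "\<not> module.dependent (sQ :: rat \<Rightarrow> 'k sqm \<Rightarrow> 'k sqm) B"
proof
  assume "module.dependent (sQ :: rat \<Rightarrow> 'k sqm \<Rightarrow> 'k sqm) B"
  then obtain t u where tu: "finite t" "t \<subseteq> B" "(\<Sum>v\<in>t. sQ (u v) v) = 0" "\<exists>v\<in>t. u v \<noteq> 0"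
    unfolding module.dependent_explicit[OF mod_sQ] by blast
  obtain D where D: "D > 0" "\<forall>v\<in>t. \<exists>z::int. of_int D * u v = (of_int z :: rat)"
    using int_multiple[OF tu(1)] by blast
  define c where "c v = (if v \<in> t then (of_rat (of_int D * u v) :: 'k) else 0)" for v
  have cZ: "\<forall>b\<in>B. c b \<in> \<int>"
  proof
    fix b assume "b \<in> B"
    show "c b \<in> \<int>"
    proof (cases "b \<in> t")
      case True
      then obtain z where "of_int D * u b = (of_int z :: rat)" using D by blast
      then show ?thesis using True by (simp add: c_def)
    qed (simp add: c_def)
  qed
  have z0: "(\<Sum>v\<in>t. of_rat (u v) * v i j) = (0::'k)" for i j
    using arg_cong[OF tu(3), of "\<lambda>F. F i j"] by (simp add: sum_fun_apply2 sQ_def)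
  have "(\<lambda>i j. \<Sum>b\<in>B. c b * b i j) = (\<lambda>i j. 0)"
  proof (intro ext)
    fix i j
    have "(\<Sum>b\<in>B. c b * b i j) = (\<Sum>b\<in>t. of_rat (of_int D * u b) * b i j)"
      using tu(2) fin by (intro sum.mono_neutral_cong_right) (auto simp: c_def)
    also have "\<dots> = of_int D * (\<Sum>v\<in>t. of_rat (u v) * v i j)"
      by (simp add: sum_distrib_left of_rat_mult mult_ac)
    also have "\<dots> = 0" using z0 by simp
    finally show "(\<Sum>b\<in>B. c b * b i j) = 0" .
  qed
  then have "\<forall>b\<in>B. c b = 0" using ci cZ by (simp add: c_indep_def)
  moreover obtain v where v: "v \<in> t" "u v \<noteq> 0" using tu(4) by blast
  ultimately have "c v = 0" using tu(2) by auto
  then show False using v D by (simp add: c_def)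
qed

definition Eij :: "nat \<Rightarrow> nat \<Rightarrow> 'k::field_char_0 sqm" where
  "Eij i j = (\<lambda>a c. if a = i \<and> c = j then 1 else 0)"

lemma dual_exists:
  fixes B :: "'k::field_char_0 sqm set"
  assumes fin: "finite B" and w: "\<forall>b\<in>B. wfm n b" and rat: "\<forall>b\<in>B. \<forall>i j. b i j \<in> \<rat>"
    and ci: "c_indep \<int> B"
  shows "\<exists>wt. \<forall>b\<in>B. \<forall>b'\<in>B. (\<Sum>i<n. \<Sum>j<n. wt b i j * b' i j) = (if b = b' then 1 else 0)"
proof -
  have pair: "vector_space_pair (sQ :: rat \<Rightarrow> 'k sqm \<Rightarrow> 'k sqm) ((*) :: rat \<Rightarrow> rat \<Rightarrow> rat)"
    unfolding vector_space_pair_def using vs_sQ vs_rat by blast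
  have ind: "\<not> module.dependent (sQ :: rat \<Rightarrow> 'k sqm \<Rightarrow> 'k sqm) B" by (rule indep_sQ[OF fin ci])
  have "\<forall>b\<in>B. \<exists>g. Vector_Spaces.linear sQ ((*) :: rat \<Rightarrow> rat \<Rightarrow> rat) g \<and> (\<forall>x\<in>B. g x = (if b = x then 1 else 0))"
    by (intro ballI, rule vector_space_pair.linear_independent_extend[OF pair ind])
  then obtain G where G: "\<forall>b\<in>B. Vector_Spaces.linear sQ ((*) :: rat \<Rightarrow> rat \<Rightarrow> rat) (G b) \<and> (\<forall>x\<in>B. G b x = (if b = x then 1 else 0))"
    by (metis bchoice)
  define wt where "wt b i j = (of_rat (G b (Eij i j)) :: 'k)" for b i j
  have "(\<Sum>i<n. \<Sum>j<n. wt b i j * b' i j) = (if b = b' then 1 else 0)" if b: "b \<in> B" and b': "b' \<in> B" for b b'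
  proof -
    have "\<forall>i j. \<exists>r. b' i j = of_rat r" using rat b' Rats_def by blast
    then obtain q where q: "\<And>i j. b' i j = of_rat (q i j)" by metis
    have mh: "module_hom sQ ((*) :: rat \<Rightarrow> rat \<Rightarrow> rat) (G b)"
      using G b module_hom_iff_linear by blast
    have dec: "b' = (\<Sum>ij\<in>{..<n} \<times> {..<n}. sQ (q (fst ij) (snd ij)) (Eij (fst ij) (snd ij)))"
    proof (intro ext)
      fix a c
      have "(\<Sum>ij\<in>{..<n} \<times> {..<n}. sQ (q (fst ij) (snd ij)) (Eij (fst ij) (snd ij))) a c
          = (\<Sum>ij\<in>{..<n} \<times> {..<n}. if ij = (a, c) then of_rat (q a c) else 0)"
        unfolding sum_fun_apply2 by (intro sum.cong) (auto simp: sQ_def Eij_def)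
      also have "\<dots> = (if a < n \<and> c < n then of_rat (q a c) else 0)"
        by (simp add: sum.delta')
      also have "\<dots> = b' a c" using w b' q by (auto simp: wfm_def)
      finally show "b' a c = (\<Sum>ij\<in>{..<n} \<times> {..<n}. sQ (q (fst ij) (snd ij)) (Eij (fst ij) (snd ij))) a c" by simp
    qed
    have "G b b' = (\<Sum>ij\<in>{..<n} \<times> {..<n}. q (fst ij) (snd ij) * G b (Eij (fst ij) (snd ij)))"
      by (subst dec) (simp add: module_hom.sum[OF mh] module_hom.scale[OF mh])
    then have "(of_rat (G b b') :: 'k) = (\<Sum>ij\<in>{..<n} \<times> {..<n}. wt b (fst ij) (snd ij) * b' (fst ij) (snd ij))"
      by (simp add: of_rat_sum of_rat_mult wt_def q mult.commute)
    also have "\<dots> = (\<Sum>i<n. \<Sum>j<n. wt b i j * b' i j)"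
      by (simp add: sum.cartesian_product split_def)
    finally show ?thesis using G b b' by auto
  qed
  then show ?thesis by blast
qed



lemma cspan_mono: "C \<subseteq> C' \<Longrightarrow> S \<subseteq> S' \<Longrightarrow> cspan C S \<subseteq> cspan C' S'"
  unfolding cspan_def by blast

lemma cspan_base: "1 \<in> C \<Longrightarrow> x \<in> S \<Longrightarrow> x \<in> cspan C S"
  unfolding cspan_def
  by (rule CollectI, rule exI[of _ "{x}"], rule exI[of _ "\<lambda>_. 1"]) auto

lemma cspan_sub:
  assumes z: "(\<lambda>i j. 0) \<in> V"
    and a: "\<And>x y. x \<in> V \<Longrightarrow> y \<in> V \<Longrightarrow> (\<lambda>i j. x i j + y i j) \<in> V"
    and s: "\<And>c x. c \<in> C \<Longrightarrow> x \<in> V \<Longrightarrow> (\<lambda>i j. c * x i j) \<in> V"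
    and S: "S \<subseteq> V"
  shows "cspan C S \<subseteq> V"
proof
  fix x assume "x \<in> cspan C S"
  then obtain F c where x: "x = (\<lambda>i j. \<Sum>M\<in>F. c M * M i j)" "finite F" "F \<subseteq> S" "\<forall>M\<in>F. c M \<in> C"
    unfolding cspan_def by blast
  have "finite F \<Longrightarrow> F \<subseteq> S \<Longrightarrow> (\<forall>M\<in>F. c M \<in> C) \<Longrightarrow> (\<lambda>i j. \<Sum>M\<in>F. c M * M i j) \<in> V"
  proof (induct F rule: finite_induct)
    case empty then show ?case using z by simp
  next
    case (insert M F)
    have "(\<lambda>i j. c M * M i j) \<in> V" using insert S by (intro s) auto
    moreover have "(\<lambda>i j. \<Sum>M\<in>F. c M * M i j) \<in> V" using insert by auto
    ultimately have "(\<lambda>i j. (\<lambda>i j. c M * M i j) i j + (\<lambda>i j. \<Sum>M\<in>F. c M * M i j) i j) \<in> V" by (rule a)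
    then show ?case using insert by simp
  qed
  then show "x \<in> V" using x by simp
qed

lemma cspan_zero: "0 \<in> C \<Longrightarrow> (\<lambda>i j. 0) \<in> cspan C S"
  unfolding cspan_def by (rule CollectI, rule exI[of _ "{}"]) auto

lemma cspan_add:
  assumes C: "0 \<in> C" "\<And>a b. a \<in> C \<Longrightarrow> b \<in> C \<Longrightarrow> a + b \<in> C"
    and x: "x \<in> cspan C S" and y: "y \<in> cspan C S"
  shows "(\<lambda>i j. x i j + y i j) \<in> cspan C S"
proof -
  obtain F1 c1 where 1: "x = (\<lambda>i j. \<Sum>M\<in>F1. c1 M * M i j)" "finite F1" "F1 \<subseteq> S" "\<forall>M\<in>F1. c1 M \<in> C"
    using x unfolding cspan_def by blast
  obtain F2 c2 where 2: "y = (\<lambda>i j. \<Sum>M\<in>F2. c2 M * M i j)" "finite F2" "F2 \<subseteq> S" "\<forall>M\<in>F2. c2 M \<in> C"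
    using y unfolding cspan_def by blast
  define c where "c M = (if M \<in> F1 then c1 M else 0) + (if M \<in> F2 then c2 M else 0)" for M
  have "(\<lambda>i j. x i j + y i j) = (\<lambda>i j. \<Sum>M\<in>F1 \<union> F2. c M * M i j)"
  proof (intro ext)
    fix i j
    have e1: "(\<Sum>M\<in>F1 \<union> F2. (if M \<in> F1 then c1 M else 0) * M i j) = (\<Sum>M\<in>F1. c1 M * M i j)"
      using 1 2 by (intro sum.mono_neutral_cong_right) auto
    have e2: "(\<Sum>M\<in>F1 \<union> F2. (if M \<in> F2 then c2 M else 0) * M i j) = (\<Sum>M\<in>F2. c2 M * M i j)"
      using 1 2 by (intro sum.mono_neutral_cong_right) auto
    show "x i j + y i j = (\<Sum>M\<in>F1 \<union> F2. c M * M i j)"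
      unfolding c_def distrib_right sum.distrib e1 e2 using 1 2 by simp
  qed
  moreover have "\<forall>M\<in>F1 \<union> F2. c M \<in> C" using 1 2 C by (auto simp: c_def)
  ultimately show ?thesis using 1 2 unfolding cspan_def by blast
qed

lemma cspan_scale:
  assumes C: "\<And>a b. a \<in> C \<Longrightarrow> b \<in> C \<Longrightarrow> a * b \<in> C"
    and c: "c \<in> C" and x: "x \<in> cspan C S"
  shows "(\<lambda>i j. c * x i j) \<in> cspan C S"
proof -
  obtain F d where 1: "x = (\<lambda>i j. \<Sum>M\<in>F. d M * M i j)" "finite F" "F \<subseteq> S" "\<forall>M\<in>F. d M \<in> C"
    using x unfolding cspan_def by blast
  have "(\<lambda>i j. c * x i j) = (\<lambda>i j. \<Sum>M\<in>F. (c * d M) * M i j)"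
    using 1 by (simp add: sum_distrib_left mult.assoc)
  moreover have "\<forall>M\<in>F. c * d M \<in> C" using 1 C c by auto
  ultimately show ?thesis using 1 unfolding cspan_def
    by (intro CollectI exI[of _ F] exI[of _ "\<lambda>M. c * d M"]) auto
qed

lemma cspan_idem:
  assumes "0 \<in> C" "\<And>a b. a \<in> C \<Longrightarrow> b \<in> C \<Longrightarrow> a + b \<in> C" "\<And>a b. a \<in> C \<Longrightarrow> b \<in> C \<Longrightarrow> a * b \<in> C"
  shows "cspan C (cspan C S) \<subseteq> cspan C S"
  by (rule cspan_sub) (auto intro: cspan_zero cspan_add cspan_scale assms)

lemma cspan_full:
  assumes "finite B" "0 \<in> C" "x \<in> cspan C B"
  shows "\<exists>m. (\<forall>b\<in>B. m b \<in> C) \<and> x = (\<lambda>i j. \<Sum>b\<in>B. m b * b i j)"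
proof -
  obtain F c where 1: "x = (\<lambda>i j. \<Sum>M\<in>F. c M * M i j)" "finite F" "F \<subseteq> B" "\<forall>M\<in>F. c M \<in> C"
    using assms(3) unfolding cspan_def by blast
  define m where "m b = (if b \<in> F then c b else 0)" for b
  have "x = (\<lambda>i j. \<Sum>b\<in>B. m b * b i j)"
  proof (intro ext)
    fix i j
    have "x i j = (\<Sum>M\<in>F. c M * M i j)" using 1 by simp
    also have "\<dots> = (\<Sum>b\<in>B. m b * b i j)"
      using 1 assms(1) unfolding m_def by (intro sum.mono_neutral_cong_left) auto
    finally show "x i j = (\<Sum>b\<in>B. m b * b i j)" .
  qed
  moreover have "\<forall>b\<in>B. m b \<in> C" using 1 assms(2) by (auto simp: m_def)
  ultimately show ?thesis by blast
qed

lemma cspan_fullI: "finite B \<Longrightarrow> \<forall>b\<in>B. m b \<in> C \<Longrightarrow> (\<lambda>i j. \<Sum>b\<in>B. m b * b i j) \<in> cspan C B"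
  unfolding cspan_def by blast

lemma Ints_ring: "0 \<in> \<int>" "\<And>a b. a \<in> \<int> \<Longrightarrow> b \<in> \<int> \<Longrightarrow> a + b \<in> \<int>" "\<And>a b. a \<in> \<int> \<Longrightarrow> b \<in> \<int> \<Longrightarrow> a * b \<in> \<int>" "1 \<in> \<int>"
  by auto
lemma Rats_ring: "0 \<in> \<rat>" "\<And>a b. a \<in> \<rat> \<Longrightarrow> b \<in> \<rat> \<Longrightarrow> a + b \<in> \<rat>" "\<And>a b. a \<in> \<rat> \<Longrightarrow> b \<in> \<rat> \<Longrightarrow> a * b \<in> \<rat>" "1 \<in> \<rat>"
  by auto

context padic begin
lemma Zp_ring: "0 \<in> Zp av" "\<And>a b. a \<in> Zp av \<Longrightarrow> b \<in> Zp av \<Longrightarrow> a + b \<in> Zp av" "\<And>a b. a \<in> Zp av \<Longrightarrow> b \<in> Zp av \<Longrightarrow> a * b \<in> Zp av" "1 \<in> Zp av"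
  by (auto intro: Zp_0 Zp_add Zp_mult Zp_1)
end



lemma Rats_mpow: "(\<And>i j. A i j \<in> \<rat>) \<Longrightarrow> mpow n A k i j \<in> \<rat>"
proof (induct k arbitrary: i j)
  case 0 then show ?case by (simp add: mid_def)
next
  case (Suc k) then show ?case by (auto simp: mpow_Suc mmul_def intro!: Rats_sum Rats_mult)
qed

lemma Rats_mlog: "U \<in> Tr1 n \<int> \<Longrightarrow> mlog n (U::'a::field_char_0 sqm) i j \<in> \<rat>"
proof -
  assume U: "U \<in> Tr1 n \<int>"
  have "msub U (mid n) i j \<in> \<rat>" for i j
  proof (cases "i < n \<and> j < n")
    case True then have "U i j \<in> \<int>" using U by (auto simp: Tr1_def)
    then show ?thesis by (auto simp: msub_def mid_def intro: Ints_subset_Rats[THEN subsetD])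
  next
    case False then show ?thesis using U by (auto simp: Tr1_def wfm_def msub_def mid_def)
  qed
  then show ?thesis unfolding mlog_def
    by (intro Rats_sum Rats_mult Rats_divide Rats_mpow) auto
qed

lemma supper_sum: "(\<And>b. b \<in> B \<Longrightarrow> supper n (b::'a::comm_ring_1 sqm)) \<Longrightarrow> supper n (\<lambda>i j. \<Sum>b\<in>B. c b * b i j)"
  unfolding supper_def wfm_def by (auto intro!: sum.neutral) (metis mult_zero_right)+

context padic
begin

lemma mbd_comb:
  assumes "\<And>b. b \<in> B \<Longrightarrow> mbd n b R" "\<And>b. b \<in> B \<Longrightarrow> av (c b) \<le> r" "0 \<le> R" "0 \<le> r"
  shows "mbd n (\<lambda>i j. \<Sum>b\<in>B. c b * b i j) (r * R)"
proof (rule mbd_sum_max)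
  fix b assume b: "b \<in> B"
  have "mbd n (\<lambda>i j. c b * b i j) (av (c b) * R)" by (rule mbd_scale[OF assms(1)[OF b]])
  then show "mbd n (\<lambda>i j. c b * b i j) (r * R)"
    by (rule mbd_mono) (use assms b in \<open>auto intro: mult_right_mono\<close>)
qed (use assms in simp)

end

locale lh = padic p av for p and av :: "'k::field_char_0 \<Rightarrow> real" +
  fixes n :: nat and Gamma Delta :: "'k sqm set"
  assumes GZ0: "Gamma \<subseteq> Tr1 n \<int>" and Ggrp: "is_mgroup n Gamma"
    and LH: "lattice_hull n Gamma Delta" and DZ0: "Delta \<subseteq> Tr1 n \<int>"
begin

abbreviation "Gp \<equiv> pclosure av n Gamma"
abbreviation "Dp \<equiv> pclosure av n Delta"
abbreviation "Lp \<equiv> Lie_L n Gp"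

lemma GZ: "Gamma \<subseteq> Tr1 n (Zp av)" using GZ0 Tr1_Ints_Zp by blast
lemma DZ: "Delta \<subseteq> Tr1 n (Zp av)" using DZ0 Tr1_Ints_Zp by blast
lemma Dgrp: "is_mgroup n Delta" using LH by (simp add: lattice_hull_def)
lemma GD: "Gamma \<subseteq> Delta" using LH by (simp add: lattice_hull_def)
lemma Gp_grp: "is_mgroup n Gp" by (rule closure_group[OF Ggrp GZ])
lemma Dp_grp: "is_mgroup n Dp" by (rule closure_group[OF Dgrp DZ])
lemma GpDp: "Gp \<subseteq> Dp" by (rule closure_mono[OF GD])
lemma Gp_tr1: "Gp \<subseteq> Tr1 n (Zp av)" by (auto simp: pclosure_def)
lemma Dp_tr1: "Dp \<subseteq> Tr1 n (Zp av)" by (auto simp: pclosure_def)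

lemma Bex: "\<exists>B. finite B \<and> c_indep \<int> B \<and> mlog n ` Delta = cspan \<int> B
   \<and> cspan \<rat> (mlog n ` Delta) = Lie_L n Gamma"
  using LH by (simp add: lattice_hull_def is_lattice_in_def)

definition "BB = (SOME B. finite B \<and> c_indep \<int> B \<and> mlog n ` Delta = cspan \<int> B
   \<and> cspan \<rat> (mlog n ` Delta) = Lie_L n Gamma)"

lemma BB: "finite BB" "c_indep \<int> BB" "mlog n ` Delta = cspan \<int> BB"
   "cspan \<rat> (mlog n ` Delta) = Lie_L n Gamma"
  using someI_ex[OF Bex] unfolding BB_def[symmetric] by auto

lemma BB_sub: "BB \<subseteq> mlog n ` Delta"
  using BB(3) cspan_base[of "\<int>"] by auto

lemma BB_props:
  assumes b: "b \<in> BB"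
  shows "wfm n b" "supper n b" "\<And>i j. b i j \<in> \<rat>" "mbd n b (CL n)"
proof -
  obtain d where d: "d \<in> Delta" "b = mlog n d" using BB_sub b by auto
  have dT: "d \<in> Tr1 n \<int>" using d DZ0 by auto
  have dZ: "d \<in> Tr1 n (Zp av)" using d DZ by auto
  show "supper n b" using supper_log[OF dT] d by simp
  then show "wfm n b" by (rule supper_wfm)
  show "\<And>i j. b i j \<in> \<rat>" using Rats_mlog[OF dT] d by simp
  show "mbd n b (CL n)" using log_bd[OF dZ] d by simp
qed

lemma wt_ex: "\<exists>wt. \<forall>b\<in>BB. \<forall>b'\<in>BB. (\<Sum>i<n. \<Sum>j<n. wt b i j * b' i j) = (if b = b' then 1 else 0)"
  by (rule dual_exists[OF BB(1) _ _ BB(2)]) (use BB_props in auto)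

definition "wt = (SOME wt. \<forall>b\<in>BB. \<forall>b'\<in>BB. (\<Sum>i<n. \<Sum>j<n. wt b i j * b' i j) = (if b = b' then 1 else 0))"

lemma wt: "b \<in> BB \<Longrightarrow> b' \<in> BB \<Longrightarrow> (\<Sum>i<n. \<Sum>j<n. wt b i j * b' i j) = (if b = b' then 1 else 0)"
  using someI_ex[OF wt_ex] unfolding wt_def[symmetric] by blast

definition "Wc = (\<Sum>b\<in>BB. \<Sum>i<n. \<Sum>j<n. av (wt b i j))"

lemma Wc_nonneg: "0 \<le> Wc" by (simp add: Wc_def sum_nonneg)

lemma Wc_ge: "b \<in> BB \<Longrightarrow> i < n \<Longrightarrow> j < n \<Longrightarrow> av (wt b i j) \<le> Wc"
proof -
  assume b: "b \<in> BB" and ij: "i < n" "j < n"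
  have "av (wt b i j) \<le> (\<Sum>j<n. av (wt b i j))" using ij by (intro member_le_sum) auto
  also have "\<dots> \<le> (\<Sum>i<n. \<Sum>j<n. av (wt b i j))"
    using ij by (intro member_le_sum[of i "{..<n}" "\<lambda>i. \<Sum>j<n. av (wt b i j)"]) (auto intro: sum_nonneg)
  also have "\<dots> \<le> Wc" unfolding Wc_def
    using b BB(1) by (intro member_le_sum[of b BB]) (auto intro!: sum_nonneg)
  finally show ?thesis .
qed

definition "Phi b X = (\<Sum>i<n. \<Sum>j<n. wt b i j * X i j)"

lemma Phi_bd: "b \<in> BB \<Longrightarrow> mbd n X d \<Longrightarrow> 0 \<le> d \<Longrightarrow> av (Phi b X) \<le> Wc * d"
  unfolding Phi_def
proof (intro av_sum_le)
  fix i j assume b: "b \<in> BB" and X: "mbd n X d" and d: "0 \<le> d" and i: "i \<in> {..<n}" and j: "j \<in> {..<n}"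
  have "av (wt b i j) * av (X i j) \<le> Wc * d"
    using Wc_ge[OF b] X i j d Wc_nonneg by (intro mult_mono) (auto simp: mbd_def)
  then show "av (wt b i j * X i j) \<le> Wc * d" by (simp add: av_mult)
qed (auto intro: mult_nonneg_nonneg Wc_nonneg)

lemma Phi_comb: "b \<in> BB \<Longrightarrow> Phi b (\<lambda>i j. \<Sum>b'\<in>BB. m b' * b' i j) = m b"
proof -
  assume b: "b \<in> BB"
  have "Phi b (\<lambda>i j. \<Sum>b'\<in>BB. m b' * b' i j) = (\<Sum>i<n. \<Sum>j<n. \<Sum>b'\<in>BB. m b' * (wt b i j * b' i j))"
    by (simp add: Phi_def sum_distrib_left mult_ac)
  also have "\<dots> = (\<Sum>b'\<in>BB. \<Sum>i<n. \<Sum>j<n. m b' * (wt b i j * b' i j))"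
    by (rule sum_swap3[symmetric])
  also have "\<dots> = (\<Sum>b'\<in>BB. m b' * (if b = b' then 1 else 0))"
    by (intro sum.cong refl) (simp add: sum_distrib_left[symmetric] wt[OF b])
  also have "\<dots> = (\<Sum>b'\<in>BB. if b = b' then m b else 0)" by (intro sum.cong) auto
  also have "\<dots> = m b" using b BB(1) by (simp add: sum.delta)
  finally show ?thesis .
qed

lemma Phi_diff: "Phi b (msub X Y) = Phi b X - Phi b Y"
  by (simp add: Phi_def msub_def sum_subtractf right_diff_distrib)

definition "comb c = (\<lambda>i j. \<Sum>b\<in>BB. c b * b i j)"

lemma supper_comb: "supper n (comb c)"
  unfolding comb_def by (rule supper_sum) (use BB_props in auto)

lemma comb_in: "(\<forall>b\<in>BB. c b \<in> C) \<Longrightarrow> comb c \<in> cspan C BB"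
  unfolding comb_def by (rule cspan_fullI[OF BB(1)])

lemma comb_of: "0 \<in> C \<Longrightarrow> x \<in> cspan C BB \<Longrightarrow> \<exists>m. (\<forall>b\<in>BB. m b \<in> C) \<and> x = comb m"
  unfolding comb_def by (rule cspan_full[OF BB(1)])

lemma mbd_combc: "(\<And>b. b \<in> BB \<Longrightarrow> av (c b) \<le> r) \<Longrightarrow> 0 \<le> r \<Longrightarrow> mbd n (comb c) (r * CL n)"
  unfolding comb_def by (rule mbd_comb) (use BB_props CL_nonneg in auto)

lemma extractD:
  assumes M: "M \<in> Dp"
  shows "mlog n M \<in> cspan (Zp av) BB"
proof -
  have MT: "M \<in> Tr1 n (Zp av)" and nr: "near n Delta M" using M by (auto simp: pclosure_iff)
  define X where "X = mlog n M"
  have approx: "\<exists>m. (\<forall>b\<in>BB. m b \<in> \<int>) \<and> mbd n (msub X (comb m)) e" if e: "e > 0" for e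
  proof -
    define d where "d = e / (CL n + 1)"
    have d: "d > 0" using e CL_nonneg[of n] by (simp add: d_def)
    have "\<exists>g\<in>Delta. mbd n (msub M g) d" using nr d unfolding near_def by simp
    then obtain g where g: "g \<in> Delta" "mbd n (msub M g) d" by blast
    have gT: "g \<in> Tr1 n (Zp av)" using g DZ by auto
    have "mbd n (msub X (mlog n g)) (CL n * d)" unfolding X_def
      by (rule log_lip[OF MT gT g(2)]) (use d in simp)
    moreover have "CL n * d \<le> e" unfolding d_def by (rule small_div[OF CL_nonneg e])
    ultimately have A: "mbd n (msub X (mlog n g)) e" by (rule mbd_mono)
    have "mlog n g \<in> cspan \<int> BB" using g BB(3) by auto
    then obtain m where "\<forall>b\<in>BB. m b \<in> \<int>" "mlog n g = comb m" using comb_of[of "\<int>"] by auto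
    then show ?thesis using A by auto
  qed
  define c where "c b = Phi b X" for b
  have cm: "av (c b - m b) \<le> Wc * e" if "b \<in> BB" "mbd n (msub X (comb m)) e" "e > 0" for b m e
  proof -
    have "Phi b (msub X (comb m)) = c b - m b"
      using that by (simp add: Phi_diff c_def comb_def Phi_comb)
    then show ?thesis using Phi_bd[OF that(1,2)] that(3) by simp
  qed
  have cZ: "c b \<in> Zp av" if b: "b \<in> BB" for b
  proof -
    define e where "e = 1 / (Wc + 1)"
    have e: "e > 0" using Wc_nonneg by (simp add: e_def)
    obtain m where m: "\<forall>b\<in>BB. m b \<in> \<int>" "mbd n (msub X (comb m)) e" using approx[OF e] by blast
    have "av (c b - m b) \<le> Wc * e" by (rule cm[OF b m(2) e])
    also have "\<dots> \<le> 1" unfolding e_def using small_div[OF Wc_nonneg, of 1] by simp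
    finally have "av (c b - m b) \<le> 1" .
    moreover have "av (m b) \<le> 1" using m(1) b av_Ints by auto
    ultimately have "av ((c b - m b) + m b) \<le> 1" by (rule av_add_le)
    then show ?thesis by (simp add: Zp_iff)
  qed
  have "X = comb c"
  proof (rule mbd_eq)
    show "wfm n X" unfolding X_def by (rule wfm_mlog[OF tr1_wfm[OF MT]])
    show "wfm n (comb c)" by (rule supper_wfm[OF supper_comb])
    fix e :: real assume e: "e > 0"
    define e2 where "e2 = e / (CL n + 1)"
    have e2: "e2 > 0" using e CL_nonneg[of n] by (simp add: e2_def)
    define e' where "e' = min e (e2 / (Wc + 1))"
    have e': "e' > 0" using e e2 Wc_nonneg by (simp add: e'_def)
    obtain m where m: "\<forall>b\<in>BB. m b \<in> \<int>" "mbd n (msub X (comb m)) e'" using approx[OF e'] by blast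
    have "Wc * e' \<le> Wc * (e2 / (Wc + 1))" using Wc_nonneg by (intro mult_left_mono) (auto simp: e'_def)
    also have "\<dots> \<le> e2" by (rule small_div[OF Wc_nonneg e2])
    finally have We: "Wc * e' \<le> e2" .
    have "mbd n (comb (\<lambda>b. m b - c b)) ((Wc * e') * CL n)"
    proof (rule mbd_combc)
      fix b assume b: "b \<in> BB"
      show "av (m b - c b) \<le> Wc * e'" using cm[OF b m(2) e'] by (simp add: av_diff_comm)
    qed (use Wc_nonneg e' in simp)
    moreover have "(Wc * e') * CL n \<le> e"
    proof -
      have "(Wc * e') * CL n \<le> e2 * CL n" using We CL_nonneg[of n] by (rule mult_right_mono)
      also have "\<dots> \<le> e" using small_div[OF CL_nonneg e, of n] by (simp add: e2_def mult.commute)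
      finally show ?thesis .
    qed
    ultimately have B: "mbd n (comb (\<lambda>b. m b - c b)) e" by (rule mbd_mono)
    have A: "mbd n (msub X (comb m)) e" using m(2) by (rule mbd_mono) (simp add: e'_def)
    have eq: "msub X (comb c) = (\<lambda>i j. msub X (comb m) i j + comb (\<lambda>b. m b - c b) i j)"
      by (simp add: msub_def comb_def fun_eq_iff left_diff_distrib sum_subtractf)
    show "mbd n (msub X (comb c)) e" unfolding eq mbd_def
      using A B by (auto simp: mbd_def intro!: av_add_le)
  qed
  then show ?thesis using comb_in[of c "Zp av"] cZ unfolding X_def by auto
qed

lemma constructD:
  assumes c: "\<forall>b\<in>BB. av (c b) \<le> 1"
  shows "mexp n (comb c) \<in> Dp"
proof (rule closure_mem[OF _ _ DZ])
  show "wfm n (mexp n (comb c))" by (intro wfm_mexp supper_wfm supper_comb)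
  show "near n Delta (mexp n (comb c))" unfolding near_def
  proof (intro allI impI)
    fix e :: real assume e: "e > 0"
    define R where "R = max 1 (CL n)"
    have R1: "1 \<le> R" and RL: "CL n \<le> R" by (auto simp: R_def)
    define \<eta> where "\<eta> = e / (CE n R + 1)"
    have \<eta>: "\<eta> > 0" using e CE_nonneg[of R n] R1 by (simp add: \<eta>_def)
    define d where "d = \<eta> / (CL n + 1)"
    have d: "d > 0" using \<eta> CL_nonneg[of n] by (simp add: d_def)
    have "\<forall>b\<in>BB. \<exists>k::nat. av (c b - of_nat k) < d" using c dense_nat[OF _ d] by blast
    then obtain mm where mm: "\<forall>b\<in>BB. av (c b - of_nat (mm b)) < d" by (metis bchoice)
    define m where "m b = (of_nat (mm b) :: 'k)" for b
    have "comb m \<in> cspan \<int> BB" by (rule comb_in) (simp add: m_def)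
    then obtain g where g: "g \<in> Delta" "comb m = mlog n g" using BB(3) by auto
    have gT: "g \<in> Tr1 n \<int>" using g DZ0 by auto
    have eg: "mexp n (comb m) = g" using g(2) exp_log[OF gT] by simp
    have "mbd n (comb (\<lambda>b. c b - m b)) (d * CL n)"
      by (rule mbd_combc) (use mm d in \<open>auto simp: m_def less_imp_le\<close>)
    moreover have "d * CL n \<le> \<eta>" unfolding d_def using small_div[OF CL_nonneg \<eta>, of n] by (simp add: mult.commute)
    moreover have "msub (comb c) (comb m) = comb (\<lambda>b. c b - m b)"
      by (simp add: msub_def comb_def fun_eq_iff left_diff_distrib sum_subtractf)
    ultimately have D: "mbd n (msub (comb c) (comb m)) \<eta>" by (auto intro: mbd_mono)
    have b1: "mbd n (comb c) R"
      using mbd_combc[of c 1] c RL by (auto intro: mbd_mono)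
    have b2: "mbd n (comb m) R"
      using mbd_combc[of m 1] RL av_of_nat by (auto simp: m_def intro: mbd_mono)
    have "mbd n (msub (mexp n (comb c)) (mexp n (comb m))) (CE n R * \<eta>)"
      by (rule exp_lip[OF b1 b2 R1 D]) (use \<eta> in simp)
    moreover have "CE n R * \<eta> \<le> e" unfolding \<eta>_def by (rule small_div[OF CE_nonneg e]) (use R1 in simp)
    ultimately show "\<exists>h\<in>Delta. mbd n (msub (mexp n (comb c)) h) e" using g eg by (auto intro: mbd_mono)
  qed
qed


lemma logDp_eq: "mlog n ` Dp = cspan (Zp av) BB"
proof
  show "mlog n ` Dp \<subseteq> cspan (Zp av) BB" using extractD by auto
  show "cspan (Zp av) BB \<subseteq> mlog n ` Dp"
  proof
    fix x assume "x \<in> cspan (Zp av) BB"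
    then obtain c where c: "\<forall>b\<in>BB. c b \<in> Zp av" "x = comb c" using comb_of[OF Zp_0] by blast
    have "mexp n (comb c) \<in> Dp" by (rule constructD) (use c in \<open>auto simp: Zp_iff\<close>)
    moreover have "mlog n (mexp n (comb c)) = comb c" by (rule log_exp[OF supper_comb])
    ultimately show "x \<in> mlog n ` Dp" using c by (metis image_eqI)
  qed
qed

lemma spanD_eq: "cspan (Zp av) (mlog n ` Delta) = cspan (Zp av) BB"
proof
  show "cspan (Zp av) BB \<subseteq> cspan (Zp av) (mlog n ` Delta)" by (rule cspan_mono[OF order_refl BB_sub])
  have "mlog n ` Delta \<subseteq> cspan (Zp av) BB"
    unfolding BB(3) by (rule cspan_mono[OF _ order_refl]) (use Ints_Zp in blast)
  then have "cspan (Zp av) (mlog n ` Delta) \<subseteq> cspan (Zp av) (cspan (Zp av) BB)"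
    by (rule cspan_mono[OF order_refl])
  also have "\<dots> \<subseteq> cspan (Zp av) BB" by (rule cspan_idem) (auto intro: Zp_ring)
  finally show "cspan (Zp av) (mlog n ` Delta) \<subseteq> cspan (Zp av) BB" .
qed

lemma conj1: "mlog n ` Dp = cspan (Zp av) (mlog n ` Delta)"
  using logDp_eq spanD_eq by simp

lemma Lp_def': "Lp = cspan \<rat> (mlog n ` Gp)" by (simp add: Lie_L_def)

lemma Lp_zero: "(\<lambda>i j. 0) \<in> Lp" unfolding Lp_def' by (rule cspan_zero) simp
lemma Lp_add: "x \<in> Lp \<Longrightarrow> y \<in> Lp \<Longrightarrow> (\<lambda>i j. x i j + y i j) \<in> Lp"
  unfolding Lp_def' by (rule cspan_add) auto
lemma Lp_qscale: "q \<in> \<rat> \<Longrightarrow> x \<in> Lp \<Longrightarrow> (\<lambda>i j. q * x i j) \<in> Lp"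
  unfolding Lp_def' by (rule cspan_scale) auto

lemma Lp_gen_scale: "g \<in> Gp \<Longrightarrow> (\<lambda>i j. c * mlog n g i j) \<in> Lp"
proof -
  assume g: "g \<in> Gp"
  have gT: "g \<in> Tr1 n (Zp av)" using g Gp_tr1 by auto
  obtain K where K: "av (of_nat (p ^ K) * c) \<le> 1" using scale_into_Zp by blast
  define u where "u = of_nat (p ^ K) * c"
  have "mexp n (\<lambda>i j. u * mlog n g i j) \<in> Gp" by (rule zp_power[OF Ggrp GZ g]) (use K in \<open>simp add: u_def\<close>)
  moreover have "mlog n (mexp n (\<lambda>i j. u * mlog n g i j)) = (\<lambda>i j. u * mlog n g i j)"
    by (rule log_exp[OF supper_scale[OF supper_log[OF gT]]])
  ultimately have "(\<lambda>i j. u * mlog n g i j) \<in> mlog n ` Gp" by (metis image_eqI)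
  then have "(\<lambda>i j. u * mlog n g i j) \<in> Lp" unfolding Lp_def' by (rule cspan_base[rotated]) simp
  then have "(\<lambda>i j. (1 / of_nat (p ^ K)) * (u * mlog n g i j)) \<in> Lp" by (rule Lp_qscale[rotated]) simp
  moreover have "p \<noteq> 0" using p_gt1 by simp
  ultimately show ?thesis by (simp add: u_def)
qed

lemma Lp_scale: "x \<in> Lp \<Longrightarrow> (\<lambda>i j. c * x i j) \<in> Lp"
proof -
  assume x: "x \<in> Lp"
  let ?V = "{x. \<forall>c. (\<lambda>i j. c * x i j) \<in> Lp}"
  have "cspan \<rat> (mlog n ` Gp) \<subseteq> ?V"
  proof (rule cspan_sub)
    show "(\<lambda>i j. 0) \<in> ?V" using Lp_zero by simp
    show "(\<lambda>i j. x i j + y i j) \<in> ?V" if "x \<in> ?V" "y \<in> ?V" for x y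
      using that Lp_add[of "\<lambda>i j. c * x i j" "\<lambda>i j. c * y i j" for c] by (simp add: distrib_left)
    show "(\<lambda>i j. q * x i j) \<in> ?V" if "q \<in> \<rat>" "x \<in> ?V" for q x
      using that by (auto simp: mult.assoc[symmetric])
    show "mlog n ` Gp \<subseteq> ?V" using Lp_gen_scale by auto
  qed
  then show ?thesis using x unfolding Lp_def' by auto
qed

lemma conj2: "cspan (Zp av) (mlog n ` Delta) \<subseteq> Lp"
proof (rule cspan_sub)
  show "(\<lambda>i j. 0) \<in> Lp" by (rule Lp_zero)
  show "(\<lambda>i j. x i j + y i j) \<in> Lp" if "x \<in> Lp" "y \<in> Lp" for x y using that by (rule Lp_add)
  show "(\<lambda>i j. c * x i j) \<in> Lp" if "x \<in> Lp" for c x using that by (rule Lp_scale)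
  have "mlog n ` Delta \<subseteq> cspan \<rat> (mlog n ` Delta)" using cspan_base[of "\<rat>" _ "mlog n ` Delta"] Rats_1 by blast
  also have "\<dots> = cspan \<rat> (mlog n ` Gamma)" using BB(4) by (simp add: Lie_L_def)
  also have "\<dots> \<subseteq> Lp" unfolding Lp_def'
    by (rule cspan_mono[OF order_refl]) (use subset_closure[OF GZ] in blast)
  finally show "mlog n ` Delta \<subseteq> Lp" .
qed

lemma conj3: "is_lattice_in (Zp av) UNIV (mlog n ` Dp) Lp"
  unfolding is_lattice_in_def
proof (intro exI[of _ BB] conjI)
  show "finite BB" by (rule BB(1))
  show "c_indep (Zp av) BB" unfolding c_indep_def
  proof (intro allI impI ballI)
    fix c b assume c: "\<forall>b\<in>BB. c b \<in> Zp av" and z: "(\<lambda>i j. \<Sum>b\<in>BB. c b * b i j) = (\<lambda>i j. 0)" and b: "b \<in> BB"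
    have "c b = Phi b (\<lambda>i j. \<Sum>b\<in>BB. c b * b i j)" by (rule Phi_comb[OF b, symmetric])
    also have "\<dots> = 0" unfolding z by (simp add: Phi_def)
    finally show "c b = 0" .
  qed
  show "mlog n ` Dp = cspan (Zp av) BB" by (rule logDp_eq)
  show "cspan UNIV (mlog n ` Dp) = Lp"
  proof
    show "cspan UNIV (mlog n ` Dp) \<subseteq> Lp"
      by (rule cspan_sub) (use Lp_zero Lp_add Lp_scale conj1 conj2 in auto)
    show "Lp \<subseteq> cspan UNIV (mlog n ` Dp)" unfolding Lp_def'
      by (rule cspan_mono) (use GpDp in auto)
  qed
qed

lemma conj7: "Dp \<subseteq> Mal_R n Gp"
proof
  fix M assume M: "M \<in> Dp"
  have MT: "M \<in> Tr1 n (Zp av)" using M Dp_tr1 by auto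
  have "mlog n M \<in> Lp" using conj1 conj2 M by auto
  moreover have "mexp n (mlog n M) = M" by (rule exp_log[OF MT])
  ultimately show "M \<in> Mal_R n Gp" unfolding Mal_R_def by (metis image_eqI)
qed

end


unbundle no fps_syntax

theorem lemma2p16:
  fixes n p :: nat and av :: "'k::field_char_0 \<Rightarrow> real"
    and Gamma Delta :: "'k sqm set"
  assumes "prime p" and "padic_absval p av"
    and "Gamma \<subseteq> Tr1 n \<int>" and "is_mgroup n Gamma" and "fin_gen n Gamma"
    and "torsion_free n Gamma" and "nilpotent_mgroup n Gamma"
    and "lattice_hull n Gamma Delta" and "Delta \<subseteq> Tr1 n \<int>"
  shows "mlog n ` pclosure av n Delta = cspan (Zp av) (mlog n ` Delta)
       \<and> cspan (Zp av) (mlog n ` Delta) \<subseteq> Lie_L n (pclosure av n Gamma)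
       \<and> is_lattice_in (Zp av) UNIV (mlog n ` pclosure av n Delta) (Lie_L n (pclosure av n Gamma))
       \<and> is_mgroup n (pclosure av n Gamma) \<and> is_mgroup n (pclosure av n Delta)
       \<and> pclosure av n Gamma \<subseteq> pclosure av n Delta
       \<and> pclosure av n Delta \<subseteq> Mal_R n (pclosure av n Gamma)"
proof -
  interpret lh p av n Gamma Delta
    by unfold_locales (use assms in auto)
  show ?thesis using conj1 conj2 conj3 Gp_grp Dp_grp GpDp conj7 by blast
qed

end
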